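(* Let $p\ge 0$, $q\ge 1$ be integers with $2p+q+2\ge 6$, and let $G=B'(p,q,p)$. If a graph $G'$ is $L$-cospectral with $G$, then the nonincreasing degree sequence of $G'$ equals that of $G$, namely $(p+q+1,\,p+q+1,\,2^{q},\,1^{2p})$.
   Context: Two graphs are $L$-cospectral if their Laplacian matrices $L=D-A$ have the same multiset of eigenvalues. In a degree sequence, a superscript indicates the number of repetitions. For integers $p,q,r\ge 0$, the binary star graph $B(p,q,r)$ is the simple graph on $p+q+r+2$ vertices $u,v,w_1,\dots,w_q,u_1,\dots,u_p,v_1,\dots,v_r$ whose edges are $uw_i$ and $vw_i$ for $1\le i\le q$, $uu_j$ for $1\le j\le p$, and $vv_k$ for $1\le k\le r$; $B'(p,q,r)$ is obtained from $B(p,q,r)$ by adding the edge $uv$. *)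

theory Defs
  imports "Jordan_Normal_Form.Char_Poly" "HOL-Computational_Algebra.Polynomial"
begin

definition simple_graph :: "nat \<Rightarrow> (nat \<Rightarrow> nat \<Rightarrow> bool) \<Rightarrow> bool" where
  "simple_graph n E \<longleftrightarrow> (\<forall>i j. E i j \<longrightarrow> i < n \<and> j < n \<and> i \<noteq> j \<and> E j i)"

definition degree :: "nat \<Rightarrow> (nat \<Rightarrow> nat \<Rightarrow> bool) \<Rightarrow> nat \<Rightarrow> nat" where
  "degree n E i = card {j. j < n \<and> E i j}"

definition laplacian :: "nat \<Rightarrow> (nat \<Rightarrow> nat \<Rightarrow> bool) \<Rightarrow> real mat" where
  "laplacian n E = mat n n (\<lambda>(i,j). (if i = j then real (degree n E i) else 0)
                                   - (if E i j then 1 else 0))"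

text \<open>Multiset of Laplacian eigenvalues (roots of the characteristic polynomial,
  with algebraic multiplicity; L is real symmetric, so all eigenvalues are real).\<close>
definition lap_spectrum :: "nat \<Rightarrow> (nat \<Rightarrow> nat \<Rightarrow> bool) \<Rightarrow> real multiset" where
  "lap_spectrum n E = proots (char_poly (laplacian n E))"

definition L_cospectral :: "nat \<Rightarrow> (nat \<Rightarrow> nat \<Rightarrow> bool) \<Rightarrow> nat \<Rightarrow> (nat \<Rightarrow> nat \<Rightarrow> bool) \<Rightarrow> bool" where
  "L_cospectral n E n' E' \<longleftrightarrow> lap_spectrum n E = lap_spectrum n' E'"

definition degree_sequence :: "nat \<Rightarrow> (nat \<Rightarrow> nat \<Rightarrow> bool) \<Rightarrow> nat list" where
  "degree_sequence n E = rev (sort (map (degree n E) [0..<n]))"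

text \<open>B(p,q,r) on vertices 0..p+q+r+1: u = 0, v = 1, w_i = 1+i (1 \<le> i \<le> q),
  u_j = q+1+j (1 \<le> j \<le> p), v_k = p+q+1+k (1 \<le> k \<le> r).\<close>
definition binary_star_edge :: "nat \<Rightarrow> nat \<Rightarrow> nat \<Rightarrow> nat \<Rightarrow> nat \<Rightarrow> bool" where
  "binary_star_edge p q r x y \<longleftrightarrow>
     (let isw = (\<lambda>z. 2 \<le> z \<and> z \<le> q + 1);
          isu = (\<lambda>z. q + 2 \<le> z \<and> z \<le> p + q + 1);
          isv = (\<lambda>z. p + q + 2 \<le> z \<and> z \<le> p + q + r + 1);
          e = (\<lambda>a b. (a = 0 \<and> isw b) \<or> (a = 1 \<and> isw b) \<or> (a = 0 \<and> isu b) \<or> (a = 1 \<and> isv b))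
      in e x y \<or> e y x)"

definition binary_star'_edge :: "nat \<Rightarrow> nat \<Rightarrow> nat \<Rightarrow> nat \<Rightarrow> nat \<Rightarrow> bool" where
  "binary_star'_edge p q r x y \<longleftrightarrow>
     binary_star_edge p q r x y \<or> (x = 0 \<and> y = 1) \<or> (x = 1 \<and> y = 0)"

end

theory Submission
  imports Defs "Jordan_Normal_Form.Schur_Decomposition"
begin

lemma real_sym_eigen:
  fixes A :: "real mat"
  assumes A: "A \<in> carrier_mat n n" and sym: "transpose_mat A = A" and n: "n > 0"
  shows "\<exists>e v. v \<in> carrier_vec n \<and> v \<noteq> 0\<^sub>v n \<and> A *\<^sub>v v = e \<cdot>\<^sub>v v"
proof -
  define Ac :: "complex mat" where "Ac = of_real_hom.mat_hom A"
  have Ac: "Ac \<in> carrier_mat n n" using A unfolding Ac_def by auto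
  have cp: "char_poly Ac = map_poly of_real (char_poly A)"
    unfolding Ac_def by (rule of_real_hom.char_poly_hom[OF A])
  have deg: "Polynomial.degree (char_poly Ac) = n" using degree_monic_char_poly[OF Ac] by auto
  have "\<not> constant (poly (char_poly Ac))"
  proof
    assume c: "constant (poly (char_poly Ac))"
    then have "Polynomial.degree (char_poly Ac) = 0" by (simp add: constant_degree)
    with deg n show False by auto
  qed
  then obtain z where z: "poly (char_poly Ac) z = 0" using fundamental_theorem_of_algebra by blast
  then have "eigenvalue Ac z" using eigenvalue_root_char_poly[OF Ac] by auto
  then obtain v where ev: "eigenvector Ac v z" unfolding eigenvalue_def by auto
  then have v: "v \<in> carrier_vec n" and v0: "v \<noteq> 0\<^sub>v n" and Av: "Ac *\<^sub>v v = z \<cdot>\<^sub>v v"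
    unfolding eigenvector_def using Ac by auto
  define s where "s = (\<Sum>i<n. cnj (v$i) * (Ac *\<^sub>v v) $ i)"
  define c where "c = (\<Sum>i<n. cnj (v$i) * v $ i)"
  have s1: "s = z * c" unfolding s_def c_def Av using v
    by (auto simp: sum_distrib_left intro!: sum.cong)
  have s2: "s = (\<Sum>i<n. \<Sum>j<n. cnj (v$i) * of_real (A $$ (i,j)) * v$j)"
    unfolding s_def using v A Ac
    by (auto simp: Ac_def scalar_prod_def sum_distrib_left lessThan_atLeast0 mult.assoc intro!: sum.cong)
  have "cnj s = (\<Sum>i<n. \<Sum>j<n. v$i * of_real (A $$ (i,j)) * cnj (v$j))"
    unfolding s2 by (simp add: cnj_sum)
  also have "\<dots> = (\<Sum>j<n. \<Sum>i<n. v$i * of_real (A $$ (i,j)) * cnj (v$j))"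
    by (rule sum.swap)
  also have "\<dots> = s" unfolding s2
  proof (intro sum.cong refl)
    fix j i assume "j \<in> {..<n}" "i \<in> {..<n}"
    then have "A $$ (i,j) = A $$ (j,i)" using sym A
      by (metis carrier_matD(1) carrier_matD(2) index_transpose_mat(1) lessThan_iff)
    then show "v$i * of_real (A $$ (i,j)) * cnj (v$j) = cnj (v$j) * of_real (A $$ (j,i)) * v$i"
      by simp
  qed
  finally have cs: "cnj s = s" .
  have cc: "cnj c = c" unfolding c_def by (simp add: cnj_sum mult.commute)
  have "c \<noteq> 0"
  proof
    assume c0: "c = 0"
    have "c = of_real (\<Sum>i<n. (cmod (v$i))^2)"
      unfolding c_def of_real_sum by (intro sum.cong refl, subst complex_norm_square, simp add: mult.commute)
    then have "(\<Sum>i<n. (cmod (v$i))^2) = 0" using c0 by (metis of_real_eq_0_iff)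
    then have "\<forall>i\<in>{..<n}. (cmod (v$i))^2 = 0"
      by (subst (asm) sum_nonneg_eq_0_iff) auto
    then have "v = 0\<^sub>v n" using v by (intro eq_vecI) auto
    with v0 show False by auto
  qed
  have "cnj z * c = z * c" using cs cc s1 by (metis complex_cnj_mult)
  then have zr: "cnj z = z" using \<open>c \<noteq> 0\<close> by simp
  define e where "e = Re z"
  have ze: "z = of_real e" unfolding e_def using zr
    by (metis Reals_cnj_iff complex_is_Real_iff of_real_Re)
  have "poly (char_poly A) e = 0"
    using z unfolding cp ze using of_real_hom.poly_map_poly[of "char_poly A" e] by simp
  then have "eigenvalue A e" using eigenvalue_root_char_poly[OF A] by auto
  then obtain w where "eigenvector A w e" unfolding eigenvalue_def by auto
  then show ?thesis unfolding eigenvector_def using A by auto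
qed

definition extm :: "real \<Rightarrow> real mat \<Rightarrow> real mat" where
  "extm c X = mat (Suc (dim_row X)) (Suc (dim_row X))
     (\<lambda>(i,j). if i = 0 \<and> j = 0 then c else if i = 0 \<or> j = 0 then 0 else X $$ (i - 1, j - 1))"

definition diagm :: "real list \<Rightarrow> real mat" where
  "diagm ls = mat (length ls) (length ls) (\<lambda>(i,j). if i = j then ls ! i else 0)"

lemma extm_carrier[simp]: "X \<in> carrier_mat n n \<Longrightarrow> extm c X \<in> carrier_mat (Suc n) (Suc n)"
  unfolding extm_def by auto

lemma diagm_carrier[simp]: "diagm ls \<in> carrier_mat (length ls) (length ls)"
  unfolding diagm_def by auto

lemma mult_index_sum:
  assumes "A \<in> carrier_mat nr n" "B \<in> carrier_mat n nc" "i < nr" "j < nc"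
  shows "(A * B) $$ (i,j) = (\<Sum>k<n. A $$ (i,k) * B $$ (k,j))"
  using assms by (auto simp: scalar_prod_def lessThan_atLeast0 intro!: sum.cong)

lemma extm_mult:
  assumes X: "X \<in> carrier_mat n n" and Y: "Y \<in> carrier_mat n n"
  shows "extm a X * extm b Y = extm (a*b) (X*Y)"
proof (rule eq_matI)
  fix i j assume i: "i < dim_row (extm (a*b) (X*Y))" and j: "j < dim_col (extm (a*b) (X*Y))"
  then have i: "i < Suc n" and j: "j < Suc n" using X Y by (auto simp: extm_def)
  have "(extm a X * extm b Y) $$ (i,j) = (\<Sum>k<Suc n. extm a X $$ (i,k) * extm b Y $$ (k,j))"
    by (rule mult_index_sum[OF extm_carrier[OF X] extm_carrier[OF Y] i j])
  also have "\<dots> = extm a X $$ (i,0) * extm b Y $$ (0,j) + (\<Sum>k<n. extm a X $$ (i,Suc k) * extm b Y $$ (Suc k,j))"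
    by (subst sum.lessThan_Suc_shift) simp
  also have "\<dots> = extm (a*b) (X*Y) $$ (i,j)"
  proof (cases i)
    case 0
    then show ?thesis using X Y j by (cases j) (auto simp: extm_def)
  next
    case (Suc i')
    show ?thesis
    proof (cases j)
      case 0
      then show ?thesis using X Y i Suc by (auto simp: extm_def)
    next
      case (Suc j')
      then show ?thesis using X Y i j \<open>i = Suc i'\<close>
        by (auto simp: extm_def scalar_prod_def lessThan_atLeast0 intro!: sum.cong)
    qed
  qed
  finally show "(extm a X * extm b Y) $$ (i,j) = extm (a*b) (X*Y) $$ (i,j)" .
qed (insert X Y, auto simp: extm_def)

lemma extm_transpose:
  assumes X: "X \<in> carrier_mat n n"
  shows "transpose_mat (extm a X) = extm a (transpose_mat X)"
  using X by (intro eq_matI) (auto simp: extm_def)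

lemma extm_one: "extm 1 (1\<^sub>m n) = 1\<^sub>m (Suc n)"
  by (intro eq_matI) (auto simp: extm_def)

lemma extm_diagm: "extm e (diagm ls) = diagm (e # ls)"
  by (intro eq_matI) (auto simp: extm_def diagm_def nth_Cons')

lemma real_conj_vec[simp]: "conjugate (v :: real vec) = v"
  by (intro eq_vecI) auto

theorem spectral:
  fixes A :: "real mat"
  assumes "A \<in> carrier_mat n n" "transpose_mat A = A"
  shows "\<exists>U ls. U \<in> carrier_mat n n \<and> transpose_mat U * U = 1\<^sub>m n \<and> length ls = n
     \<and> A = U * diagm ls * transpose_mat U"
  using assms
proof (induction n arbitrary: A)
  case 0
  then show ?case
    by (intro exI[of _ "1\<^sub>m 0"] exI[of _ "[]"]) (auto intro!: eq_matI simp: diagm_def)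
next
  case (Suc n A)
  define N where "N = Suc n"
  have A: "A \<in> carrier_mat N N" and symA: "transpose_mat A = A" using Suc N_def by auto
  obtain e v where v: "v \<in> carrier_vec N" and v0: "v \<noteq> 0\<^sub>v N" and Av: "A *\<^sub>v v = e \<cdot>\<^sub>v v"
    using real_sym_eigen[OF A symA] N_def by auto
  interpret cof_vec_space N "TYPE(real)" .
  define b where "b = basis_completion v"
  from basis_completion[OF v v0, folded b_def]
  have dist_b: "distinct b" and indep: "\<not> lin_dep (set b)" and bc: "set b \<subseteq> carrier_vec N"
    and hdb: "hd b = v" and len_b: "length b = N" by auto
  from hdb len_b obtain vs where bv: "b = v # vs" unfolding N_def by (cases b, auto)
  define ws where "ws = gram_schmidt N b"
  from gram_schmidt_result[OF bc dist_b indep ws_def]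
  have wsc: "set ws \<subseteq> carrier_vec N" and orth: "corthogonal ws" and lenws: "length ws = N"
    using len_b by auto
  have hdws: "hd ws = v" unfolding ws_def bv by (rule gram_schmidt_hd[OF v])
  define us where "us = map (\<lambda>w. (1 / sqrt (w \<bullet> w)) \<cdot>\<^sub>v w) ws"
  have lenus: "length us = N" unfolding us_def using lenws by simp
  have usc: "\<And>i. i < N \<Longrightarrow> us ! i \<in> carrier_vec N" unfolding us_def using wsc lenws by auto
  have wsc': "\<And>i. i < N \<Longrightarrow> ws ! i \<in> carrier_vec N" using wsc lenws by auto
  have wpos: "\<And>i. i < N \<Longrightarrow> ws ! i \<bullet> ws ! i > 0"
  proof -
    fix i assume i: "i < N"
    have "ws ! i \<bullet>c ws ! i \<noteq> 0" using corthogonalD[OF orth, of i i] i lenws by auto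
    moreover have "ws ! i \<bullet>c ws ! i \<ge> 0" by (rule conjugate_square_ge_0_vec)
    ultimately show "ws ! i \<bullet> ws ! i > 0" by simp
  qed
  have usorth: "\<And>i j. i < N \<Longrightarrow> j < N \<Longrightarrow> us ! i \<bullet> us ! j = (if i = j then 1 else 0)"
  proof -
    fix i j assume i: "i < N" and j: "j < N"
    have "us ! i \<bullet> us ! j = (1 / sqrt (ws!i \<bullet> ws!i)) * (1 / sqrt (ws!j \<bullet> ws!j)) * (ws ! i \<bullet> ws ! j)"
      unfolding us_def using i j lenws wsc'[OF i] wsc'[OF j]
      by (simp add: scalar_prod_smult_left scalar_prod_smult_right)
    also have "\<dots> = (if i = j then 1 else 0)"
    proof (cases "i = j")
      case True
      then show ?thesis using wpos[OF i] by (simp add: field_simps)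
    next
      case False
      then have "ws ! i \<bullet>c ws ! j = 0" using corthogonalD[OF orth, of i j] i j lenws by auto
      then show ?thesis using False by simp
    qed
    finally show "us ! i \<bullet> us ! j = (if i = j then 1 else 0)" .
  qed
  define W where "W = mat_of_cols N us"
  have W: "W \<in> carrier_mat N N" unfolding W_def using lenus by auto
  have colW: "\<And>i. i < N \<Longrightarrow> col W i = us ! i" unfolding W_def using lenus usc
    by (simp add: col_mat_of_cols)
  have WTW: "transpose_mat W * W = 1\<^sub>m N"
  proof (rule eq_matI)
    fix i j assume "i < dim_row (1\<^sub>m N :: real mat)" "j < dim_col (1\<^sub>m N :: real mat)"
    then have i: "i < N" and j: "j < N" by auto
    have "(transpose_mat W * W) $$ (i,j) = col W i \<bullet> col W j" using W i j by simp
    then show "(transpose_mat W * W) $$ (i,j) = 1\<^sub>m N $$ (i,j)"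
      using usorth[OF i j] colW[OF i] colW[OF j] i j by simp
  qed (insert W, auto)
  have WWT: "W * transpose_mat W = 1\<^sub>m N"
    by (rule mat_mult_left_right_inverse[of _ N], insert W WTW, auto)
  have us0: "us ! 0 = (1 / sqrt (v \<bullet> v)) \<cdot>\<^sub>v v"
    unfolding us_def using hdws lenws N_def by (cases ws) auto
  define u where "u = us ! 0"
  have u: "u \<in> carrier_vec N" unfolding u_def using usc N_def by auto
  have Au: "A *\<^sub>v u = e \<cdot>\<^sub>v u" unfolding u_def us0 using A v Av
    by (simp add: mult_mat_vec smult_smult_assoc mult.commute)
  define A' where "A' = transpose_mat W * A * W"
  have A': "A' \<in> carrier_mat N N" unfolding A'_def using A W by auto
  have "transpose_mat A' = transpose_mat W * transpose_mat (transpose_mat W * A)"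
    unfolding A'_def by (rule transpose_mult[of _ N N _ N]) (use A W in auto)
  also have "transpose_mat (transpose_mat W * A) = transpose_mat A * W"
    by (subst transpose_mult[of _ N N _ N]) (use A W in auto)
  finally have symA': "transpose_mat A' = A'"
    unfolding A'_def symA using A W by (simp add: assoc_mult_mat[of _ N N _ N _ N])
  have A'col: "\<And>i. i < N \<Longrightarrow> A' $$ (i,0) = (if i = 0 then e else 0)"
  proof -
    fix i assume i: "i < N"
    have "A' $$ (i,0) = (transpose_mat W * (A * W)) $$ (i,0)"
      unfolding A'_def using A W by (simp add: assoc_mult_mat[of _ N N _ N _ N])
    also have "\<dots> = col W i \<bullet> col (A * W) 0" using A W i N_def by simp
    also have "col (A * W) 0 = A *\<^sub>v col W 0" using A W N_def by auto
    also have "col W 0 = u" using colW[of 0] N_def u_def by simp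
    also have "col W i \<bullet> (A *\<^sub>v u) = e * (col W i \<bullet> u)" unfolding Au
      using u colW[OF i] usc[OF i] by (simp add: scalar_prod_smult_right)
    also have "col W i \<bullet> u = (if i = 0 then 1 else 0)" unfolding u_def colW[OF i]
      using usorth[OF i, of 0] N_def by simp
    finally show "A' $$ (i,0) = (if i = 0 then e else 0)" by simp
  qed
  have A'row: "\<And>j. j < N \<Longrightarrow> A' $$ (0,j) = (if j = 0 then e else 0)"
  proof -
    fix j assume j: "j < N"
    have "A' $$ (0,j) = transpose_mat A' $$ (j,0)" using A' j N_def by simp
    then show "A' $$ (0,j) = (if j = 0 then e else 0)" using symA' A'col[OF j] by simp
  qed
  define B where "B = mat n n (\<lambda>(i,j). A' $$ (Suc i, Suc j))"
  have B: "B \<in> carrier_mat n n" unfolding B_def by auto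
  have symB: "transpose_mat B = B"
  proof (rule eq_matI)
    fix i j assume "i < dim_row B" "j < dim_col B"
    then have i: "i < n" and j: "j < n" using B by auto
    have "A' $$ (Suc j, Suc i) = transpose_mat A' $$ (Suc i, Suc j)" using A' i j N_def by simp
    then show "transpose_mat B $$ (i,j) = B $$ (i,j)" using i j symA' unfolding B_def by simp
  qed (insert B, auto)
  have A'B: "A' = extm e B"
  proof (rule eq_matI)
    fix i j assume "i < dim_row (extm e B)" "j < dim_col (extm e B)"
    then have i: "i < N" and j: "j < N" using B N_def by (auto simp: extm_def)
    show "A' $$ (i,j) = extm e B $$ (i,j)"
    proof (cases "i = 0")
      case True then show ?thesis using A'row[OF j] i j B N_def by (auto simp: extm_def)
    next
      case False
      then show ?thesis using A'col[OF i] i j B N_def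
        by (cases "j = 0") (auto simp: extm_def B_def)
    qed
  qed (insert A' B N_def, auto simp: extm_def)
  obtain V ls where V: "V \<in> carrier_mat n n" and VTV: "transpose_mat V * V = 1\<^sub>m n"
    and lenls: "length ls = n" and BV: "B = V * diagm ls * transpose_mat V"
    using Suc.IH[OF B symB] by auto
  have D: "diagm ls \<in> carrier_mat n n" using lenls diagm_carrier by metis
  define U where "U = W * extm 1 V"
  have U: "U \<in> carrier_mat N N" unfolding U_def using W V N_def by auto
  have UT: "transpose_mat U = extm 1 (transpose_mat V) * transpose_mat W"
    unfolding U_def extm_transpose[OF V, symmetric]
    by (rule transpose_mult[of _ N N _ N]) (use W V N_def in auto)
  have "transpose_mat U * U = (extm 1 (transpose_mat V) * transpose_mat W) * (W * extm 1 V)"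
    unfolding UT by (simp add: U_def)
  also have "\<dots> = extm 1 (transpose_mat V) * (transpose_mat W * W) * extm 1 V"
    using W V N_def by (simp add: assoc_mult_mat[of _ N N _ N _ N])
  also have "\<dots> = extm 1 (transpose_mat V * V)"
    unfolding WTW using V N_def
    by (simp add: extm_mult[OF transpose_carrier_mat[THEN iffD2, OF V] V] right_mult_one_mat[OF extm_carrier[OF transpose_carrier_mat[THEN iffD2, OF V]]])
  also have "\<dots> = 1\<^sub>m N" unfolding VTV extm_one N_def ..
  finally have UTU: "transpose_mat U * U = 1\<^sub>m N" .
  have "W * A' * transpose_mat W = (W * transpose_mat W) * A * (W * transpose_mat W)"
    unfolding A'_def using A W
    by (simp add: assoc_mult_mat[of _ N N _ N _ N])
  then have "A = W * A' * transpose_mat W" unfolding WWT using A by simp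
  also have "A' = extm 1 V * extm e (diagm ls) * extm 1 (transpose_mat V)"
    unfolding A'B BV using V D
    by (simp add: extm_mult[OF V D] extm_mult[OF mult_carrier_mat[OF V D] transpose_carrier_mat[THEN iffD2, OF V]])
  also have "W * (extm 1 V * extm e (diagm ls) * extm 1 (transpose_mat V)) * transpose_mat W
     = U * diagm (e # ls) * transpose_mat U"
    unfolding UT extm_diagm[symmetric] unfolding U_def
    using W extm_carrier[OF V, of 1] extm_carrier[OF D, of e] extm_carrier[OF transpose_carrier_mat[THEN iffD2, OF V], of 1] N_def
    by (simp add: assoc_mult_mat[of _ N N _ N _ N])
  finally have "A = U * diagm (e # ls) * transpose_mat U" .
  then show ?case using U UTU lenls N_def by (intro exI[of _ U] exI[of _ "e # ls"]) auto
qed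

locale orth_decomp =
  fixes A U :: "real mat" and ls :: "real list" and n :: nat
  assumes U: "U \<in> carrier_mat n n" and UTU: "transpose_mat U * U = 1\<^sub>m n"
    and len: "length ls = n" and AU: "A = U * diagm ls * transpose_mat U"
begin

lemma UUT: "U * transpose_mat U = 1\<^sub>m n"
  by (rule mat_mult_left_right_inverse[of _ n], insert U UTU, auto)

lemma A: "A \<in> carrier_mat n n" unfolding AU using U len by (metis diagm_carrier mult_carrier_mat transpose_carrier_mat)

lemma Aentry: "i < n \<Longrightarrow> j < n \<Longrightarrow> A $$ (i,j) = (\<Sum>k<n. U $$ (i,k) * ls ! k * U $$ (j,k))"
proof -
  assume i: "i < n" and j: "j < n"
  have D: "diagm ls \<in> carrier_mat n n" using len diagm_carrier by metis
  have "A $$ (i,j) = (\<Sum>l<n. (U * diagm ls) $$ (i,l) * transpose_mat U $$ (l,j))"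
    unfolding AU by (rule mult_index_sum[OF mult_carrier_mat[OF U D] _ i j]) (use U in auto)
  also have "\<dots> = (\<Sum>l<n. (\<Sum>k<n. U $$ (i,k) * diagm ls $$ (k,l)) * U $$ (j,l))"
    using U D i j by (intro sum.cong refl) (auto simp: scalar_prod_def lessThan_atLeast0 intro!: sum.cong)
  also have "\<dots> = (\<Sum>l<n. U $$ (i,l) * ls ! l * U $$ (j,l))"
  proof (intro sum.cong refl)
    fix l assume l: "l \<in> {..<n}"
    have "(\<Sum>k<n. U $$ (i,k) * diagm ls $$ (k,l)) = (\<Sum>k<n. if k = l then U $$ (i,l) * ls ! l else 0)"
      using l len by (intro sum.cong refl) (auto simp: diagm_def)
    also have "\<dots> = U $$ (i,l) * ls ! l" using l by simp
    finally show "(\<Sum>k<n. U $$ (i,k) * diagm ls $$ (k,l)) * U $$ (j,l) = U $$ (i,l) * ls ! l * U $$ (j,l)"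
      by simp
  qed
  finally show ?thesis .
qed

lemma orth_cols: "k < n \<Longrightarrow> l < n \<Longrightarrow> (\<Sum>i<n. U $$ (i,k) * U $$ (i,l)) = (if k = l then 1 else 0)"
proof -
  assume k: "k < n" and l: "l < n"
  have "(transpose_mat U * U) $$ (k,l) = (\<Sum>i<n. U $$ (i,k) * U $$ (i,l))"
    using mult_index_sum[of "transpose_mat U" n n U n k l] U k l by auto
  then show ?thesis using UTU k l by simp
qed

lemma orth_rows: "i < n \<Longrightarrow> j < n \<Longrightarrow> (\<Sum>k<n. U $$ (i,k) * U $$ (j,k)) = (if i = j then 1 else 0)"
proof -
  assume i: "i < n" and j: "j < n"
  have "(U * transpose_mat U) $$ (i,j) = (\<Sum>k<n. U $$ (i,k) * U $$ (j,k))"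
    using mult_index_sum[of U n n "transpose_mat U" n i j] U i j by auto
  then show ?thesis using UUT i j by simp
qed

definition coef :: "(nat \<Rightarrow> real) \<Rightarrow> nat \<Rightarrow> real" where
  "coef x k = (\<Sum>i<n. U $$ (i,k) * x i)"

lemma Ax: "i < n \<Longrightarrow> (\<Sum>j<n. A $$ (i,j) * x j) = (\<Sum>k<n. U $$ (i,k) * ls ! k * coef x k)"
proof -
  assume i: "i < n"
  have "(\<Sum>j<n. A $$ (i,j) * x j) = (\<Sum>j<n. \<Sum>k<n. U $$ (i,k) * ls ! k * U $$ (j,k) * x j)"
    using i by (simp add: Aentry sum_distrib_right)
  also have "\<dots> = (\<Sum>k<n. \<Sum>j<n. U $$ (i,k) * ls ! k * U $$ (j,k) * x j)" by (rule sum.swap)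
  also have "\<dots> = (\<Sum>k<n. U $$ (i,k) * ls ! k * coef x k)"
    unfolding coef_def by (simp add: sum_distrib_left mult.assoc)
  finally show ?thesis .
qed

lemma expand: "i < n \<Longrightarrow> x i = (\<Sum>k<n. U $$ (i,k) * coef x k)"
proof -
  assume i: "i < n"
  have "(\<Sum>k<n. U $$ (i,k) * coef x k) = (\<Sum>k<n. \<Sum>j<n. U $$ (i,k) * U $$ (j,k) * x j)"
    unfolding coef_def by (simp add: sum_distrib_left mult.assoc)
  also have "\<dots> = (\<Sum>j<n. \<Sum>k<n. U $$ (i,k) * U $$ (j,k) * x j)" by (rule sum.swap)
  also have "\<dots> = (\<Sum>j<n. (if i = j then 1 else 0) * x j)"
  proof (intro sum.cong refl)
    fix j assume j: "j \<in> {..<n}"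
    have "(\<Sum>k<n. U $$ (i,k) * U $$ (j,k) * x j) = (\<Sum>k<n. U $$ (i,k) * U $$ (j,k)) * x j"
      by (simp add: sum_distrib_right)
    then show "(\<Sum>k<n. U $$ (i,k) * U $$ (j,k) * x j) = (if i = j then 1 else 0) * x j"
      using orth_rows[OF i, of j] j by simp
  qed
  also have "\<dots> = (\<Sum>j<n. if i = j then x j else 0)" by (intro sum.cong) auto
  also have "\<dots> = x i" using i by (simp add: sum.delta)
  finally show ?thesis by simp
qed

lemma gen_sq: "(\<Sum>i<n. (\<Sum>k<n. U $$ (i,k) * f k) * (\<Sum>k<n. U $$ (i,k) * g k)) = (\<Sum>k<n. f k * g k)"
proof -
  have "(\<Sum>i<n. (\<Sum>k<n. U $$ (i,k) * f k) * (\<Sum>l<n. U $$ (i,l) * g l))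
      = (\<Sum>i<n. \<Sum>k<n. \<Sum>l<n. U $$ (i,k) * U $$ (i,l) * (f k * g l))"
    unfolding sum_product by (intro sum.cong refl) (simp add: mult_ac)
  also have "\<dots> = (\<Sum>k<n. \<Sum>i<n. \<Sum>l<n. U $$ (i,k) * U $$ (i,l) * (f k * g l))" by (rule sum.swap)
  also have "\<dots> = (\<Sum>k<n. \<Sum>l<n. \<Sum>i<n. U $$ (i,k) * U $$ (i,l) * (f k * g l))"
    by (rule sum.cong[OF refl], rule sum.swap)
  also have "\<dots> = (\<Sum>k<n. \<Sum>l<n. (if k = l then 1 else 0) * (f k * g l))"
  proof (intro sum.cong refl)
    fix k l assume k: "k \<in> {..<n}" and l: "l \<in> {..<n}"
    have "(\<Sum>i<n. U $$ (i,k) * U $$ (i,l) * (f k * g l)) = (\<Sum>i<n. U $$ (i,k) * U $$ (i,l)) * (f k * g l)"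
      by (simp add: sum_distrib_right)
    then show "(\<Sum>i<n. U $$ (i,k) * U $$ (i,l) * (f k * g l)) = (if k = l then 1 else 0) * (f k * g l)"
      using orth_cols[of k l] k l by simp
  qed
  also have "\<dots> = (\<Sum>k<n. \<Sum>l<n. if k = l then f k * g l else 0)" by (intro sum.cong) auto
  also have "\<dots> = (\<Sum>k<n. f k * g k)" by (simp add: sum.delta)
  finally show ?thesis .
qed

lemma norm_sq: "(\<Sum>i<n. (x i)^2) = (\<Sum>k<n. (coef x k)^2)"
proof -
  have "(\<Sum>i<n. (x i)^2) = (\<Sum>i<n. (\<Sum>k<n. U $$ (i,k) * coef x k) * (\<Sum>k<n. U $$ (i,k) * coef x k))"
    by (intro sum.cong refl) (use expand in \<open>auto simp: power2_eq_square\<close>)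
  also have "\<dots> = (\<Sum>k<n. (coef x k)^2)" by (subst gen_sq) (simp add: power2_eq_square)
  finally show ?thesis .
qed

lemma quad: "(\<Sum>i<n. x i * (\<Sum>j<n. A $$ (i,j) * x j)) = (\<Sum>k<n. ls ! k * (coef x k)^2)"
proof -
  have "(\<Sum>i<n. x i * (\<Sum>j<n. A $$ (i,j) * x j)) =
     (\<Sum>i<n. (\<Sum>k<n. U $$ (i,k) * coef x k) * (\<Sum>k<n. U $$ (i,k) * (ls ! k * coef x k)))"
    by (intro sum.cong refl) (use expand Ax in \<open>auto simp: mult.assoc\<close>)
  also have "\<dots> = (\<Sum>k<n. ls ! k * (coef x k)^2)" by (subst gen_sq) (simp add: power2_eq_square mult.left_commute)
  finally show ?thesis .
qed

lemma sqnorm: "(\<Sum>i<n. (\<Sum>j<n. A $$ (i,j) * x j)^2) = (\<Sum>k<n. (ls ! k)^2 * (coef x k)^2)"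
proof -
  have "(\<Sum>i<n. (\<Sum>j<n. A $$ (i,j) * x j)^2) =
     (\<Sum>i<n. (\<Sum>k<n. U $$ (i,k) * (ls ! k * coef x k)) * (\<Sum>k<n. U $$ (i,k) * (ls ! k * coef x k)))"
    by (intro sum.cong refl) (use Ax in \<open>auto simp: mult.assoc power2_eq_square\<close>)
  also have "\<dots> = (\<Sum>k<n. (ls ! k)^2 * (coef x k)^2)" by (subst gen_sq) (simp add: power2_eq_square mult.commute mult.left_commute)
  finally show ?thesis .
qed

lemma eigvec: "k < n \<Longrightarrow> i < n \<Longrightarrow> (\<Sum>j<n. A $$ (i,j) * U $$ (j,k)) = ls ! k * U $$ (i,k)"
proof -
  assume k: "k < n" and i: "i < n"
  have c: "coef (\<lambda>j. U $$ (j,k)) l = (if l = k then 1 else 0)" if "l < n" for l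
    unfolding coef_def using orth_cols[OF that k] by (simp add: mult.commute)
  have "(\<Sum>j<n. A $$ (i,j) * U $$ (j,k)) = (\<Sum>l<n. U $$ (i,l) * ls ! l * (if l = k then 1 else 0))"
    using Ax[OF i, of "\<lambda>j. U $$ (j,k)"] c by simp
  also have "\<dots> = (\<Sum>l<n. if l = k then U $$ (i,k) * ls ! k else 0)" by (intro sum.cong) auto
  also have "\<dots> = ls ! k * U $$ (i,k)" using k by (simp add: sum.delta')
  finally show ?thesis .
qed

lemma char_poly_A: "char_poly A = (\<Prod>a\<leftarrow>ls. [:- a, 1:])"
proof -
  have D: "diagm ls \<in> carrier_mat n n" using len diagm_carrier by metis
  have "similar_mat A (diagm ls)"
    by (rule similar_matI[of A "diagm ls" U "transpose_mat U" n], insert U D A UTU UUT AU, auto)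
  then have "char_poly A = char_poly (diagm ls)" by (rule char_poly_similar)
  also have "\<dots> = (\<Prod>a\<leftarrow>diag_mat (diagm ls). [:- a, 1:])"
    by (rule char_poly_upper_triangular[OF D]) (auto simp: diagm_def)
  also have "diag_mat (diagm ls) = ls" unfolding diag_mat_def diagm_def
    by (intro nth_equalityI) auto
  finally show ?thesis .
qed

lemma proots_lin: "proots (\<Prod>a\<leftarrow>xs. [:- a, 1:]) = mset (xs :: real list)"
proof (induction xs)
  case (Cons a xs)
  have nz: "(\<Prod>a\<leftarrow>xs. [:- a, 1:]) \<noteq> 0" by (auto simp: prod_list_zero_iff)
  have "proots ([:- a, 1:] * (\<Prod>a\<leftarrow>xs. [:- a, 1:])) = proots [:- a, 1:] + proots (\<Prod>a\<leftarrow>xs. [:- a, 1:])"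
    by (rule proots_mult) (use nz in auto)
  then show ?case using Cons by (simp only: prod_list.Cons proots_linear_factor) simp
qed simp

lemma proots_A: "proots (char_poly A) = mset ls"
  unfolding char_poly_A by (rule proots_lin)

lemma trace1: "(\<Sum>i<n. A $$ (i,i)) = sum_list ls"
proof -
  have "(\<Sum>i<n. A $$ (i,i)) = (\<Sum>i<n. \<Sum>k<n. ls ! k * (U $$ (i,k) * U $$ (i,k)))"
    by (intro sum.cong refl) (simp add: Aentry mult_ac)
  also have "\<dots> = (\<Sum>k<n. \<Sum>i<n. ls ! k * (U $$ (i,k) * U $$ (i,k)))" by (rule sum.swap)
  also have "\<dots> = (\<Sum>k<n. ls ! k)"
  proof (intro sum.cong refl)
    fix k assume k: "k \<in> {..<n}"
    have "(\<Sum>i<n. ls ! k * (U $$ (i,k) * U $$ (i,k))) = ls ! k * (\<Sum>i<n. U $$ (i,k) * U $$ (i,k))"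
      by (simp add: sum_distrib_left)
    then show "(\<Sum>i<n. ls ! k * (U $$ (i,k) * U $$ (i,k))) = ls ! k" using orth_cols[of k k] k by simp
  qed
  also have "\<dots> = sum_list ls" using len by (simp add: sum_list_sum_nth lessThan_atLeast0)
  finally show ?thesis .
qed

lemma trace2: "(\<Sum>i<n. \<Sum>j<n. (A $$ (i,j))^2) = sum_list (map (\<lambda>a. a^2) ls)"
proof -
  have At: "A $$ (i,j) = A $$ (j,i)" if "i < n" "j < n" for i j
    using Aentry that by (simp add: Aentry mult.commute mult.left_commute)
  have e: "(\<Sum>l<n. A $$ (i,l) * (if l = j then 1 else 0)) = A $$ (i,j)" if "j < n" for i j
  proof -
    have "(\<Sum>l<n. A $$ (i,l) * (if l = j then 1 else 0)) = (\<Sum>l<n. if l = j then A $$ (i,j) else 0)"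
      by (intro sum.cong) auto
    then show ?thesis using that by (simp add: sum.delta')
  qed
  have "(\<Sum>i<n. \<Sum>j<n. (A $$ (i,j))^2) = (\<Sum>j<n. \<Sum>i<n. (A $$ (i,j))^2)" by (rule sum.swap)
  also have "\<dots> = (\<Sum>j<n. \<Sum>i<n. (\<Sum>l<n. A $$ (i,l) * (if l = j then 1 else 0))^2)"
    by (intro sum.cong refl) (simp add: e)
  also have "\<dots> = (\<Sum>j<n. \<Sum>k<n. (ls ! k)^2 * (coef (\<lambda>l. if l = j then 1 else 0) k)^2)"
    by (rule sum.cong[OF refl], rule sqnorm)
  also have "\<dots> = (\<Sum>j<n. \<Sum>k<n. (ls ! k)^2 * (U $$ (j,k))^2)"
  proof (intro sum.cong refl)
    fix j k assume j: "j \<in> {..<n}" and k: "k \<in> {..<n}"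
    have "coef (\<lambda>l. if l = j then 1 else 0) k = (\<Sum>i<n. if i = j then U $$ (j,k) else 0)"
      unfolding coef_def by (intro sum.cong) auto
    also have "\<dots> = U $$ (j,k)" using j by (simp add: sum.delta')
    finally show "(ls ! k)^2 * (coef (\<lambda>l. if l = j then 1 else 0) k)^2 = (ls ! k)^2 * (U $$ (j,k))^2" by simp
  qed
  also have "\<dots> = (\<Sum>k<n. \<Sum>j<n. (ls ! k)^2 * (U $$ (j,k))^2)" by (rule sum.swap)
  also have "\<dots> = (\<Sum>k<n. (ls ! k)^2)"
  proof (intro sum.cong refl)
    fix k assume k: "k \<in> {..<n}"
    have "(\<Sum>j<n. (ls ! k)^2 * (U $$ (j,k))^2) = (ls ! k)^2 * (\<Sum>j<n. U $$ (j,k) * U $$ (j,k))"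
      by (simp add: sum_distrib_left power2_eq_square)
    then show "(\<Sum>j<n. (ls ! k)^2 * (U $$ (j,k))^2) = (ls ! k)^2" using orth_cols[of k k] k by simp
  qed
  also have "\<dots> = sum_list (map (\<lambda>a. a^2) ls)" using len
    by (simp add: sum_list_sum_nth lessThan_atLeast0)
  finally show ?thesis .
qed

end

lemma sym_orth_decomp:
  assumes "A \<in> carrier_mat n n" "transpose_mat A = A"
  shows "\<exists>U ls. orth_decomp A U ls n"
  using spectral[OF assms] unfolding orth_decomp_def by blast

lemma lap_carrier[simp]: "laplacian n E \<in> carrier_mat n n"
  unfolding laplacian_def by auto

lemma lap_entry: "i < n \<Longrightarrow> j < n \<Longrightarrow> laplacian n E $$ (i,j) =
   (if i = j then real (degree n E i) else 0) - (if E i j then 1 else 0)"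
  unfolding laplacian_def by auto

lemma sg_irrefl: "simple_graph n E \<Longrightarrow> \<not> E i i"
  unfolding simple_graph_def by auto

lemma sg_sym: "simple_graph n E \<Longrightarrow> E i j \<Longrightarrow> E j i"
  unfolding simple_graph_def by auto

lemma sg_bound: "simple_graph n E \<Longrightarrow> E i j \<Longrightarrow> i < n \<and> j < n"
  unfolding simple_graph_def by auto

lemma lap_sym: "simple_graph n E \<Longrightarrow> transpose_mat (laplacian n E) = laplacian n E"
  unfolding laplacian_def by (intro eq_matI) (auto dest: sg_sym)

lemma deg_sum: "real (degree n E i) = (\<Sum>j<n. if E i j then 1 else 0)"
proof -
  have "(\<Sum>j<n. (if E i j then 1 else 0 :: real)) = (\<Sum>j\<in>{j. j < n \<and> E i j}. 1)"
    by (simp add: sum.If_cases lessThan_def Collect_conj_eq Int_commute)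
  then show ?thesis unfolding degree_def by simp
qed

lemma lap_row: assumes "i < n"
  shows "(\<Sum>j<n. laplacian n E $$ (i,j) * x j) = real (degree n E i) * x i - (\<Sum>j<n. if E i j then x j else 0)"
proof -
  have "(\<Sum>j<n. laplacian n E $$ (i,j) * x j) =
      (\<Sum>j<n. (if i = j then real (degree n E i) * x j else 0) - (if E i j then x j else 0))"
    using assms by (intro sum.cong refl) (auto simp: lap_entry algebra_simps)
  also have "\<dots> = (\<Sum>j<n. (if i = j then real (degree n E i) * x j else 0)) - (\<Sum>j<n. if E i j then x j else 0)"
    by (rule sum_subtractf)
  also have "(\<Sum>j<n. (if i = j then real (degree n E i) * x j else 0)) = real (degree n E i) * x i"
    using assms by (simp add: sum.delta)
  finally show ?thesis .
qed

lemma lap_quad: assumes sg: "simple_graph n E"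
  shows "(\<Sum>i<n. x i * (\<Sum>j<n. laplacian n E $$ (i,j) * x j)) =
     (\<Sum>i<n. \<Sum>j<n. if E i j then (x i - x j)^2 else 0) / 2"
proof -
  have "(\<Sum>i<n. x i * (\<Sum>j<n. laplacian n E $$ (i,j) * x j)) =
        (\<Sum>i<n. \<Sum>j<n. if E i j then (x i)^2 - x i * x j else 0)"
  proof (intro sum.cong refl)
    fix i assume i: "i \<in> {..<n}"
    have "x i * (\<Sum>j<n. laplacian n E $$ (i,j) * x j) =
        real (degree n E i) * (x i)^2 - (\<Sum>j<n. if E i j then x i * x j else 0)"
    proof -
      have "x i * (\<Sum>j<n. if E i j then x j else 0) = (\<Sum>j<n. x i * (if E i j then x j else 0))"
        by (rule sum_distrib_left)
      also have "\<dots> = (\<Sum>j<n. if E i j then x i * x j else 0)" by (intro sum.cong) auto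
      finally show ?thesis using i by (simp add: lap_row power2_eq_square right_diff_distrib)
    qed
    also have "real (degree n E i) * (x i)^2 = (\<Sum>j<n. if E i j then (x i)^2 else 0)"
    proof -
      have "real (degree n E i) * (x i)^2 = (\<Sum>j<n. (if E i j then 1 else 0) * (x i)^2)"
        unfolding deg_sum by (rule sum_distrib_right)
      also have "\<dots> = (\<Sum>j<n. if E i j then (x i)^2 else 0)" by (intro sum.cong) auto
      finally show ?thesis .
    qed
    also have "(\<Sum>j<n. if E i j then (x i)^2 else 0) - (\<Sum>j<n. if E i j then x i * x j else 0)
        = (\<Sum>j<n. (if E i j then (x i)^2 else 0) - (if E i j then x i * x j else 0))"
      by (rule sum_subtractf[symmetric])
    also have "\<dots> = (\<Sum>j<n. if E i j then (x i)^2 - x i * x j else 0)" by (intro sum.cong) auto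
    finally show "x i * (\<Sum>j<n. laplacian n E $$ (i,j) * x j) = (\<Sum>j<n. if E i j then (x i)^2 - x i * x j else 0)" .
  qed
  moreover have "(\<Sum>i<n. \<Sum>j<n. if E i j then (x i)^2 - x i * x j else 0) =
        (\<Sum>i<n. \<Sum>j<n. if E i j then (x j)^2 - x j * x i else 0)"
  proof -
    have "(\<Sum>i<n. \<Sum>j<n. if E i j then (x i)^2 - x i * x j else 0) =
          (\<Sum>j<n. \<Sum>i<n. if E i j then (x i)^2 - x i * x j else 0)" by (rule sum.swap)
    also have "\<dots> = (\<Sum>j<n. \<Sum>i<n. if E j i then (x i)^2 - x i * x j else 0)"
      using sg by (intro sum.cong refl) (auto dest: sg_sym)
    finally show ?thesis .
  qed
  moreover have "(\<Sum>i<n. \<Sum>j<n. if E i j then (x i - x j)^2 else 0) =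
    (\<Sum>i<n. \<Sum>j<n. if E i j then (x i)^2 - x i * x j else 0) +
    (\<Sum>i<n. \<Sum>j<n. if E i j then (x j)^2 - x j * x i else 0)"
    unfolding sum.distrib[symmetric] by (intro sum.cong refl) (auto simp: power2_eq_square algebra_simps)
  ultimately show ?thesis by simp
qed

lemma lap_trace1: assumes sg: "simple_graph n E"
  shows "(\<Sum>i<n. laplacian n E $$ (i,i)) = (\<Sum>i<n. real (degree n E i))"
  using sg by (intro sum.cong refl) (simp add: lap_entry sg_irrefl)

lemma lap_trace2: assumes sg: "simple_graph n E"
  shows "(\<Sum>i<n. \<Sum>j<n. (laplacian n E $$ (i,j))^2) = (\<Sum>i<n. (real (degree n E i))^2 + real (degree n E i))"
proof (intro sum.cong refl)
  fix i assume i: "i \<in> {..<n}"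
  have "(\<Sum>j<n. (laplacian n E $$ (i,j))^2) =
      (\<Sum>j<n. (if i = j then (real (degree n E i))^2 else 0) + (if E i j then 1 else 0))"
    using sg i by (intro sum.cong refl) (auto simp: lap_entry sg_irrefl)
  also have "\<dots> = (real (degree n E i))^2 + real (degree n E i)"
    using i by (simp add: sum.distrib sum.delta deg_sum)
  finally show "(\<Sum>j<n. (laplacian n E $$ (i,j))^2) = (real (degree n E i))^2 + real (degree n E i)" .
qed

context orth_decomp begin

lemma coef_zero: assumes "\<forall>i<n. (\<Sum>j<n. A $$ (i,j) * x j) = 0" and k: "k < n" and nz: "ls ! k \<noteq> 0"
  shows "coef x k = 0"
proof -
  have "(\<Sum>k<n. (ls ! k)^2 * (coef x k)^2) = 0" using sqnorm[of x] assms(1) by simp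
  then have "\<forall>k\<in>{..<n}. (ls ! k)^2 * (coef x k)^2 = 0"
    by (subst (asm) sum_nonneg_eq_0_iff) auto
  then show ?thesis using k nz by auto
qed

lemma kernel_span: assumes ker: "\<forall>i<n. (\<Sum>j<n. A $$ (i,j) * x j) = 0" and i: "i < n"
  shows "x i = (\<Sum>k\<in>{k. k < n \<and> ls ! k = 0}. U $$ (i,k) * coef x k)"
proof -
  have "x i = (\<Sum>k<n. U $$ (i,k) * coef x k)" by (rule expand[OF i])
  also have "\<dots> = (\<Sum>k\<in>{k. k < n \<and> ls ! k = 0}. U $$ (i,k) * coef x k)"
    by (rule sum.mono_neutral_right) (auto simp: coef_zero[OF ker])
  finally show ?thesis .
qed

end

lemma star_bound:
  assumes sg: "simple_graph n E" and od: "orth_decomp (laplacian n E) U ls n"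
    and le: "\<forall>k<n. ls ! k \<le> c" and v: "v < n" and d1: "degree n E v \<ge> 1"
  shows "real (degree n E v) + 1 \<le> c"
proof -
  interpret orth_decomp "laplacian n E" U ls n by (rule od)
  define d where "d = real (degree n E v)"
  define x where "x = (\<lambda>i. (if i = v then d else 0) - (if E v i then 1 else (0::real)))"
  have xv: "x v = d" unfolding x_def using sg_irrefl[OF sg] by simp
  have xn: "E v j \<Longrightarrow> x j = -1" for j unfolding x_def using sg_irrefl[OF sg] by auto
  have "(\<Sum>i<n. (x i)^2) = (\<Sum>i<n. (if i = v then d^2 else 0) + (if E v i then 1 else 0))"
    unfolding x_def using sg_irrefl[OF sg] by (intro sum.cong refl) (auto simp: power2_eq_square)
  also have "\<dots> = (\<Sum>i<n. if i = v then d^2 else 0) + (\<Sum>i<n. if E v i then 1 else 0)"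
    by (rule sum.distrib)
  also have "\<dots> = d^2 + d" using v unfolding d_def deg_sum by (simp add: sum.delta')
  finally have nx: "(\<Sum>i<n. (x i)^2) = d^2 + d" .
  define f where "f = (\<lambda>i j. if E i j then (x i - x j)^2 else (0::real))"
  have f0: "f i j \<ge> 0" for i j unfolding f_def by auto
  have s1: "(\<Sum>i<n. \<Sum>j<n. f i j) = (\<Sum>j<n. f v j) + (\<Sum>i\<in>{..<n}-{v}. \<Sum>j<n. f i j)"
    using v by (subst sum.remove[of _ v]) auto
  have s2: "(\<Sum>i\<in>{..<n}-{v}. \<Sum>j<n. f i j) \<ge> (\<Sum>i\<in>{..<n}-{v}. f i v)"
    by (intro sum_mono member_le_sum) (use v f0 in auto)
  have "(\<Sum>i<n. f i v) = f v v + (\<Sum>i\<in>{..<n}-{v}. f i v)"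
    using v by (simp add: sum.remove)
  moreover have "f v v = 0" unfolding f_def using sg_irrefl[OF sg] by simp
  ultimately have s3: "(\<Sum>i\<in>{..<n}-{v}. f i v) = (\<Sum>i<n. f i v)" by simp
  have ge: "(\<Sum>i<n. \<Sum>j<n. f i j) \<ge> (\<Sum>j<n. f v j) + (\<Sum>i<n. f i v)" using s1 s2 s3 by linarith
  have fv: "(\<Sum>j<n. f v j) = d * (d+1)^2"
  proof -
    have "(\<Sum>j<n. f v j) = (\<Sum>j<n. (if E v j then 1 else 0) * (d+1)^2)"
      unfolding f_def using xv xn by (intro sum.cong refl) auto
    also have "\<dots> = (\<Sum>j<n. if E v j then 1 else 0) * (d+1)^2" by (rule sum_distrib_right[symmetric])
    also have "\<dots> = d * (d+1)^2" unfolding d_def deg_sum ..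
    finally show ?thesis .
  qed
  have fv': "(\<Sum>i<n. f i v) = d * (d+1)^2"
  proof -
    have "(\<Sum>i<n. f i v) = (\<Sum>j<n. f v j)"
    proof (intro sum.cong refl)
      fix i assume "i \<in> {..<n}"
      have "(x i - x v)^2 = (x v - x i)^2" by (rule power2_commute)
      moreover have "E i v = E v i" using sg_sym[OF sg] by blast
      ultimately show "f i v = f v i" unfolding f_def by simp
    qed
    then show ?thesis using fv by simp
  qed
  have q: "(\<Sum>i<n. x i * (\<Sum>j<n. laplacian n E $$ (i,j) * x j)) \<ge> d * (d+1)^2"
    unfolding lap_quad[OF sg] using ge fv fv' unfolding f_def by simp
  have "(\<Sum>i<n. x i * (\<Sum>j<n. laplacian n E $$ (i,j) * x j)) \<le> c * (\<Sum>i<n. (x i)^2)"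
  proof -
    have "(\<Sum>i<n. x i * (\<Sum>j<n. laplacian n E $$ (i,j) * x j)) = (\<Sum>k<n. ls ! k * (coef x k)^2)"
      by (rule quad)
    also have "\<dots> \<le> (\<Sum>k<n. c * (coef x k)^2)"
      by (intro sum_mono mult_right_mono) (use le in auto)
    also have "\<dots> = c * (\<Sum>k<n. (coef x k)^2)" by (simp add: sum_distrib_left)
    also have "\<dots> = c * (\<Sum>i<n. (x i)^2)" using norm_sq[of x] by simp
    finally show ?thesis .
  qed
  then have "d * (d+1)^2 \<le> c * (d^2 + d)" using q nx by simp
  moreover have "d \<ge> 1" using d1 unfolding d_def by simp
  ultimately have "(d + 1) * (d * (d+1)) \<le> c * (d * (d + 1))"
    by (simp only: power2_eq_square mult.assoc mult.left_commute distrib_left distrib_right mult_1_left mult_1_right)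
  moreover have "d * (d+1) > 0" using \<open>d \<ge> 1\<close> by simp
  ultimately have "d + 1 \<le> c" by (rule mult_right_le_imp_le)
  then show ?thesis unfolding d_def .
qed

lemma gap_bound:
  assumes sg: "simple_graph n E" and od: "orth_decomp (laplacian n E) U ls n"
    and gap: "\<forall>k<n. ls ! k \<le> 2 \<or> ls ! k \<ge> \<mu>" and mu: "\<mu> \<ge> 2" and v: "v < n"
  shows "(real (degree n E v))^2 + real (degree n E v) - (2 + \<mu>) * real (degree n E v) + 2 * \<mu> \<ge> 0"
proof -
  interpret orth_decomp "laplacian n E" U ls n by (rule od)
  define x where "x = (\<lambda>i. if i = v then 1 else (0::real))"
  define L where "L = laplacian n E"
  have Lx: "(\<Sum>j<n. L $$ (i,j) * x j) = L $$ (i,v)" if "i < n" for i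
  proof -
    have "(\<Sum>j<n. L $$ (i,j) * x j) = (\<Sum>j<n. if j = v then L $$ (i,v) else 0)"
      unfolding x_def by (intro sum.cong) auto
    then show ?thesis using v by (simp add: sum.delta')
  qed
  have nx: "(\<Sum>i<n. (x i)^2) = 1"
  proof -
    have "(\<Sum>i<n. (x i)^2) = (\<Sum>i<n. if i = v then 1 else 0)" unfolding x_def by (intro sum.cong) auto
    then show ?thesis using v by (simp add: sum.delta')
  qed
  have qx: "(\<Sum>i<n. x i * (\<Sum>j<n. L $$ (i,j) * x j)) = real (degree n E v)"
  proof -
    have "(\<Sum>i<n. x i * (\<Sum>j<n. L $$ (i,j) * x j)) = (\<Sum>i<n. if i = v then L $$ (v,v) else 0)"
      by (intro sum.cong refl) (use Lx in \<open>auto simp: x_def\<close>)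
    then show ?thesis using v sg_irrefl[OF sg] by (simp add: sum.delta' L_def lap_entry)
  qed
  have sx: "(\<Sum>i<n. (\<Sum>j<n. L $$ (i,j) * x j)^2) = (real (degree n E v))^2 + real (degree n E v)"
  proof -
    have "(\<Sum>i<n. (\<Sum>j<n. L $$ (i,j) * x j)^2) = (\<Sum>j<n. (L $$ (v,j))^2)"
    proof (intro sum.cong refl)
      fix i assume i: "i \<in> {..<n}"
      have "L $$ (i,v) = L $$ (v,i)" using lap_sym[OF sg] i v unfolding L_def
        by (metis index_transpose_mat(1) lap_carrier carrier_matD lessThan_iff)
      then show "(\<Sum>j<n. L $$ (i,j) * x j)^2 = (L $$ (v,i))^2" using Lx i by simp
    qed
    also have "\<dots> = (real (degree n E v))^2 + real (degree n E v)"
    proof -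
      have "(\<Sum>j<n. (L $$ (v,j))^2) = (\<Sum>j<n. (if v = j then (real (degree n E v))^2 else 0) + (if E v j then 1 else 0))"
        using sg v by (intro sum.cong refl) (auto simp: L_def lap_entry sg_irrefl)
      also have "\<dots> = (real (degree n E v))^2 + real (degree n E v)"
        using v by (simp add: sum.distrib sum.delta deg_sum)
      finally show ?thesis .
    qed
    finally show ?thesis .
  qed
  have "0 \<le> (\<Sum>k<n. (ls ! k - 2) * (ls ! k - \<mu>) * (coef x k)^2)"
  proof (intro sum_nonneg)
    fix k assume k: "k \<in> {..<n}"
    have "(ls ! k - 2) * (ls ! k - \<mu>) \<ge> 0"
      using gap k mu by (cases "ls ! k \<le> 2") (auto intro: mult_nonpos_nonpos)
    then show "0 \<le> (ls ! k - 2) * (ls ! k - \<mu>) * (coef x k)^2" by simp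
  qed
  also have "(\<Sum>k<n. (ls ! k - 2) * (ls ! k - \<mu>) * (coef x k)^2) =
     (\<Sum>k<n. (ls ! k)^2 * (coef x k)^2) - (2 + \<mu>) * (\<Sum>k<n. ls ! k * (coef x k)^2) + 2 * \<mu> * (\<Sum>k<n. (coef x k)^2)"
  proof -
    have "(\<Sum>k<n. (ls ! k - 2) * (ls ! k - \<mu>) * (coef x k)^2) =
       (\<Sum>k<n. (ls ! k)^2 * (coef x k)^2 - ((2 + \<mu>) * (ls ! k * (coef x k)^2) - 2 * \<mu> * (coef x k)^2))"
      by (intro sum.cong refl) (simp add: algebra_simps power2_eq_square)
    also have "\<dots> = (\<Sum>k<n. (ls ! k)^2 * (coef x k)^2) - (\<Sum>k<n. (2 + \<mu>) * (ls ! k * (coef x k)^2) - 2 * \<mu> * (coef x k)^2)"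
      by (rule sum_subtractf)
    also have "(\<Sum>k<n. (2 + \<mu>) * (ls ! k * (coef x k)^2) - 2 * \<mu> * (coef x k)^2) =
       (2 + \<mu>) * (\<Sum>k<n. ls ! k * (coef x k)^2) - 2 * \<mu> * (\<Sum>k<n. (coef x k)^2)"
      by (simp add: sum_subtractf sum_distrib_left)
    finally show ?thesis by simp
  qed
  also have "\<dots> = (real (degree n E v))^2 + real (degree n E v) - (2 + \<mu>) * real (degree n E v) + 2 * \<mu>"
    using sqnorm[of x] quad[of x] norm_sq[of x] sx qx nx unfolding L_def by simp
  finally show ?thesis .
qed

lemma zero_mult:
  assumes sg: "simple_graph n E" and od: "orth_decomp (laplacian n E) U ls n"
    and v: "v < n" and w: "w < n" "w \<noteq> v" and d0: "degree n E v = 0"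
  shows "card {k. k < n \<and> ls ! k = 0} \<ge> 2"
proof (rule ccontr)
  interpret orth_decomp "laplacian n E" U ls n by (rule od)
  assume "\<not> ?thesis"
  then have c1: "card {k. k < n \<and> ls ! k = 0} \<le> 1" by simp
  have fin: "finite {k. k < n \<and> ls ! k = 0}" by simp
  have nov: "\<not> E v j" for j
  proof
    assume e: "E v j"
    then have "j \<in> {j. j < n \<and> E v j}" using sg_bound[OF sg e] by auto
    then have "{j. j < n \<and> E v j} \<noteq> {}" by auto
    moreover have "finite {j. j < n \<and> E v j}" by simp
    ultimately have "card {j. j < n \<and> E v j} \<noteq> 0" by simp
    then show False using d0 unfolding degree_def by simp
  qed
  have nov': "\<not> E j v" for j using nov sg_sym[OF sg] by blast
  define x where "x = (\<lambda>i. if i = v then 1 else (0::real))"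
  define y where "y = (\<lambda>i. if i = v then 0 else (1::real))"
  have kx: "\<forall>i<n. (\<Sum>j<n. laplacian n E $$ (i,j) * x j) = 0"
  proof (intro allI impI)
    fix i assume i: "i < n"
    have z: "(\<Sum>j<n. if E i j then x j else 0) = 0" unfolding x_def using nov' by (intro sum.neutral) auto
    have "real (degree n E i) * x i = 0" using d0 unfolding x_def by auto
    then show "(\<Sum>j<n. laplacian n E $$ (i,j) * x j) = 0" unfolding lap_row[OF i] z by simp
  qed
  have ky: "\<forall>i<n. (\<Sum>j<n. laplacian n E $$ (i,j) * y j) = 0"
  proof (intro allI impI)
    fix i assume i: "i < n"
    have "(\<Sum>j<n. if E i j then y j else 0) = (\<Sum>j<n. if E i j then 1 else 0)"
      unfolding y_def using nov' by (intro sum.cong) auto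
    then have z: "(\<Sum>j<n. if E i j then y j else 0) = real (degree n E i)" by (simp add: deg_sum)
    have "real (degree n E i) * y i = real (degree n E i)" using d0 unfolding y_def by auto
    then show "(\<Sum>j<n. laplacian n E $$ (i,j) * y j) = 0" unfolding lap_row[OF i] z by simp
  qed
  show False
  proof (cases "{k. k < n \<and> ls ! k = 0} = {}")
    case True
    have "x v = 0" using kernel_span[OF kx v] True by simp
    then show False unfolding x_def by simp
  next
    case False
    then obtain k0 where k0: "{k. k < n \<and> ls ! k = 0} = {k0}" using c1 fin
      by (metis card_1_singletonE card_0_eq le_neq_implies_less less_one)
    have "x v = U $$ (v,k0) * coef x k0" using kernel_span[OF kx v] k0 by simp
    then have Uv: "U $$ (v,k0) \<noteq> 0" unfolding x_def by auto
    have "y v = U $$ (v,k0) * coef y k0" using kernel_span[OF ky v] k0 by simp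
    then have "coef y k0 = 0" using Uv unfolding y_def by simp
    moreover have "y w = U $$ (w,k0) * coef y k0" using kernel_span[OF ky w(1)] k0 by simp
    ultimately show False unfolding y_def using w by simp
  qed
qed

lemma GE_iff: "binary_star'_edge p q p i j \<longleftrightarrow>
   (i = 0 \<and> 2 \<le> j \<and> j \<le> q+1) \<or> (i = 1 \<and> 2 \<le> j \<and> j \<le> q+1) \<or>
   (i = 0 \<and> q+2 \<le> j \<and> j \<le> p+q+1) \<or> (i = 1 \<and> p+q+2 \<le> j \<and> j \<le> p+q+p+1) \<or>
   (j = 0 \<and> 2 \<le> i \<and> i \<le> q+1) \<or> (j = 1 \<and> 2 \<le> i \<and> i \<le> q+1) \<or>
   (j = 0 \<and> q+2 \<le> i \<and> i \<le> p+q+1) \<or> (j = 1 \<and> p+q+2 \<le> i \<and> i \<le> p+q+p+1) \<or>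
   (i = 0 \<and> j = 1) \<or> (i = 1 \<and> j = 0)"
  unfolding binary_star'_edge_def binary_star_edge_def Let_def by (rule iffI; elim disjE; simp)

abbreviation "GE p q \<equiv> binary_star'_edge p q p"

lemma GE_sym: "GE p q i j \<Longrightarrow> GE p q j i"
  unfolding GE_iff by (elim disjE) simp_all

lemma GE_sg: "simple_graph (2*p+q+2) (GE p q)"
  unfolding simple_graph_def
proof (intro allI impI conjI)
  fix i j assume e: "GE p q i j"
  show "i < 2*p+q+2" using e unfolding GE_iff by (elim disjE) simp_all
  show "j < 2*p+q+2" using e unfolding GE_iff by (elim disjE) simp_all
  show "i \<noteq> j" using e unfolding GE_iff by (elim disjE) simp_all
  show "GE p q j i" using e by (rule GE_sym)
qed

lemma GE0: "GE p q 0 j \<longleftrightarrow> 1 \<le> j \<and> j \<le> p+q+1"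
  by (simp add: GE_iff; arith)

lemma GE1: "GE p q 1 j \<longleftrightarrow> j = 0 \<or> (2 \<le> j \<and> j \<le> q+1) \<or> (p+q+2 \<le> j \<and> j \<le> 2*p+q+1)"
  by (simp add: GE_iff; arith)

lemma GEW: "2 \<le> i \<Longrightarrow> i \<le> q+1 \<Longrightarrow> GE p q i j \<longleftrightarrow> j = 0 \<or> j = 1"
  by (simp add: GE_iff; arith)

lemma GEU: "q+2 \<le> i \<Longrightarrow> i \<le> p+q+1 \<Longrightarrow> GE p q i j \<longleftrightarrow> j = 0"
  by (simp add: GE_iff; arith)

lemma GEV: "p+q+2 \<le> i \<Longrightarrow> i \<le> 2*p+q+1 \<Longrightarrow> GE p q i j \<longleftrightarrow> j = 1"
  by (simp add: GE_iff; arith)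


lemma nbsum: "(\<Sum>j<(n::nat). if E i j then x j else 0) = sum x {j. j < n \<and> E i j}"
proof -
  have "{j. j < n \<and> E i j} = {j \<in> {..<n}. E i j}" by auto
  moreover have "sum x {j \<in> {..<n}. E i j} = (\<Sum>j<n. if E i j then x j else 0)"
    by (rule sum.inter_filter) simp
  ultimately show ?thesis by simp
qed

lemma nbs0: "{j. j < 2*p+q+2 \<and> GE p q 0 j} = {1..p+q+1}"
  unfolding GE0 by auto

lemma nbs1: "{j. j < 2*p+q+2 \<and> GE p q 1 j} = insert 0 ({2..q+1} \<union> {p+q+2..2*p+q+1})"
  unfolding GE1 by auto

lemma nbsW: "2 \<le> i \<Longrightarrow> i \<le> q+1 \<Longrightarrow> {j. j < 2*p+q+2 \<and> GE p q i j} = {0,1}"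
  by (auto simp: GEW)

lemma nbsU: "q+2 \<le> i \<Longrightarrow> i \<le> p+q+1 \<Longrightarrow> {j. j < 2*p+q+2 \<and> GE p q i j} = {0}"
  by (auto simp: GEU)

lemma nbsV: "p+q+2 \<le> i \<Longrightarrow> i \<le> 2*p+q+1 \<Longrightarrow> {j. j < 2*p+q+2 \<and> GE p q i j} = {1}"
  by (auto simp: GEV)

lemma GE_deg: assumes i: "i < 2*p+q+2"
  shows "degree (2*p+q+2) (GE p q) i = (if i \<le> 1 then p+q+1 else if i \<le> q+1 then 2 else 1)"
proof -
  consider "i = 0" | "i = 1" | "2 \<le> i \<and> i \<le> q+1" | "q+2 \<le> i \<and> i \<le> p+q+1" | "p+q+2 \<le> i \<and> i \<le> 2*p+q+1"
    using i by linarith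
  then show ?thesis
  proof cases
    case 1 then show ?thesis unfolding degree_def using nbs0[of p q] by simp
  next
    case 2
    have "card (insert 0 ({2..q+1} \<union> {p+q+2..2*p+q+1})) = 1 + (card {2..q+1} + card {p+q+2..2*p+q+1})"
      by (subst card_insert_disjoint) (auto simp: card_Un_disjoint)
    then show ?thesis unfolding degree_def using 2 nbs1[of p q] by simp
  next
    case 3 then show ?thesis unfolding degree_def using nbsW[of i q p] by simp
  next
    case 4 then show ?thesis unfolding degree_def using nbsU[of q i p] by simp
  next
    case 5 then show ?thesis unfolding degree_def using nbsV[of p q i] by simp
  qed
qed

lemma GE_degs: "map (degree (2*p+q+2) (GE p q)) [0..<2*p+q+2] =
   [p+q+1, p+q+1] @ replicate q 2 @ replicate (2*p) 1"
proof (rule nth_equalityI)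
  fix i assume "i < length (map (degree (2*p+q+2) (GE p q)) [0..<2*p+q+2])"
  then have i: "i < 2*p+q+2" by simp
  have "map (degree (2*p+q+2) (GE p q)) [0..<2*p+q+2] ! i = degree (2*p+q+2) (GE p q) i"
    using i by (metis add_0 diff_zero length_upt nth_map nth_upt)
  also have "\<dots> = (if i \<le> 1 then p+q+1 else if i \<le> q+1 then 2 else 1)" by (rule GE_deg[OF i])
  also have "\<dots> = ([p+q+1, p+q+1] @ replicate q 2 @ replicate (2*p) 1) ! i"
    using i by (auto simp: nth_append nth_Cons')
  finally show "map (degree (2*p+q+2) (GE p q)) [0..<2*p+q+2] ! i = ([p+q+1, p+q+1] @ replicate q 2 @ replicate (2*p) 1) ! i" .
qed simp

lemma GE_row: assumes ev: "\<forall>i<2*p+q+2. (\<Sum>j<2*p+q+2. laplacian (2*p+q+2) (GE p q) $$ (i,j) * x j) = l * x i"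
  and i: "i < 2*p+q+2"
  shows "real (degree (2*p+q+2) (GE p q) i) * x i - sum x {j. j < 2*p+q+2 \<and> GE p q i j} = l * x i"
  using ev i lap_row[OF i, of "GE p q" x] nbsum[of "GE p q" i x "2*p+q+2"] by simp

lemma sum_const_int: "(\<And>i. i \<in> A \<Longrightarrow> c * x i = y) \<Longrightarrow> finite A \<Longrightarrow> c * sum x A = real (card A) * y"
  by (simp add: sum_distrib_left)

lemma GE_eig:
  fixes l :: real
  assumes ev: "\<forall>i<2*p+q+2. (\<Sum>j<2*p+q+2. laplacian (2*p+q+2) (GE p q) $$ (i,j) * x j) = l * x i"
    and l2: "l > 2"
  shows "(\<forall>i<2*p+q+2. x i = 0) \<or> l^2 - (real (p+q+1) + 2) * l + real (2*p+q+2) = 0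
     \<or> l^2 - (real (p+q+1) + 2) * l + (real q + 2) = 0"
proof -
  let ?N = "2*p+q+2"
  note row = GE_row[OF ev]
  define a where "a = x 0"
  define b where "b = x 1"
  define SW where "SW = sum x {2..q+1}"
  define SU where "SU = sum x {q+2..p+q+1}"
  define SV where "SV = sum x {p+q+2..2*p+q+1}"
  have rW: "(2 - l) * x i = a + b" if "2 \<le> i" "i \<le> q+1" for i
  proof -
    have "real (degree ?N (GE p q) i) * x i - sum x {j. j < ?N \<and> GE p q i j} = l * x i"
      using row[of i] that by simp
    then show ?thesis using GE_deg[of i p q] nbsW[of i q p] that unfolding a_def b_def
      by (simp add: algebra_simps)
  qed
  have rU: "(1 - l) * x i = a" if "q+2 \<le> i" "i \<le> p+q+1" for i
  proof -
    have "real (degree ?N (GE p q) i) * x i - sum x {j. j < ?N \<and> GE p q i j} = l * x i"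
      using row[of i] that by simp
    then show ?thesis using GE_deg[of i p q] nbsU[of q i p] that unfolding a_def
      by (simp add: algebra_simps)
  qed
  have rV: "(1 - l) * x i = b" if "p+q+2 \<le> i" "i \<le> 2*p+q+1" for i
  proof -
    have "real (degree ?N (GE p q) i) * x i - sum x {j. j < ?N \<and> GE p q i j} = l * x i"
      using row[of i] that by simp
    then show ?thesis using GE_deg[of i p q] nbsV[of p q i] that unfolding b_def
      by (simp add: algebra_simps)
  qed
  have hW: "(2 - l) * SW = real q * (a + b)" unfolding SW_def
    by (subst sum_const_int[of _ _ _ "a+b"]) (use rW in auto)
  have hU: "(1 - l) * SU = real p * a" unfolding SU_def
    by (subst sum_const_int[of _ _ _ a]) (use rU in auto)
  have hV: "(1 - l) * SV = real p * b" unfolding SV_def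
    by (subst sum_const_int[of _ _ _ b]) (use rV in auto)
  have s0: "sum x {1..p+q+1} = b + SW + SU"
  proof -
    have "{1..p+q+1} = insert 1 ({2..q+1} \<union> {q+2..p+q+1})" by auto
    then show ?thesis unfolding b_def SW_def SU_def
      by (simp add: sum.union_disjoint)
  qed
  have s1: "sum x (insert 0 ({2..q+1} \<union> {p+q+2..2*p+q+1})) = a + SW + SV"
    unfolding a_def SW_def SV_def by (simp add: sum.union_disjoint)
  have E0: "real (p+q+1) * a - (b + SW + SU) = l * a"
    using row[of 0] GE_deg[of 0 p q] nbs0[of p q] s0 unfolding a_def by simp
  have E1: "real (p+q+1) * b - (a + SW + SV) = l * b"
    using row[of 1] GE_deg[of 1 p q] nbs1[of p q] s1 unfolding b_def by simp
  define D where "D = real (p+q+1)"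
  have D: "D = real p + real q + 1" unfolding D_def by simp
  have id1: "(a-b)*(2-l)*(l^2-(D+2)*l+(real q+2)) =
     (1-l)*(2-l)*((D*a-(b+SW+SU)-l*a)-(D*b-(a+SW+SV)-l*b)) + (2-l)*((1-l)*SU-real p*a) - (2-l)*((1-l)*SV-real p*b)"
    unfolding D by (simp add: algebra_simps power2_eq_square)
  have id2: "(a+b)*l*(l^2-(D+2)*l+real (2*p+q+2)) =
     -((1-l)*(2-l)*((D*a-(b+SW+SU)-l*a)+(D*b-(a+SW+SV)-l*b)) + 2*(1-l)*((2-l)*SW-real q*(a+b))
       + (2-l)*((1-l)*SU-real p*a) + (2-l)*((1-l)*SV-real p*b))"
    unfolding D by (simp add: algebra_simps power2_eq_square)
  have z1: "(a-b)*(2-l)*(l^2-(D+2)*l+(real q+2)) = 0"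
    unfolding id1 using E0 E1 hU hV unfolding D_def by simp
  have z2: "(a+b)*l*(l^2-(D+2)*l+real (2*p+q+2)) = 0"
    unfolding id2 using E0 E1 hU hV hW unfolding D_def by simp
  show ?thesis
  proof (cases "l^2-(D+2)*l+(real q+2) = 0 \<or> l^2-(D+2)*l+real (2*p+q+2) = 0")
    case True then show ?thesis unfolding D_def by auto
  next
    case False
    then have "a - b = 0" "a + b = 0" using z1 z2 l2 by auto
    then have ab: "a = 0" "b = 0" by auto
    have "\<forall>i<?N. x i = 0"
    proof (intro allI impI)
      fix i assume i: "i < ?N"
      consider "i = 0" | "i = 1" | "2 \<le> i \<and> i \<le> q+1" | "q+2 \<le> i \<and> i \<le> p+q+1" | "p+q+2 \<le> i \<and> i \<le> 2*p+q+1"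
        using i by linarith
      then show "x i = 0"
      proof cases
        case 1 then show ?thesis using ab a_def by simp
      next
        case 2 then show ?thesis using ab b_def by simp
      next
        case 3 then show ?thesis using rW[of i] ab l2 by simp
      next
        case 4 then show ?thesis using rU[of i] ab l2 by simp
      next
        case 5 then show ?thesis using rV[of i] ab l2 by simp
      qed
    qed
    then show ?thesis by simp
  qed
qed

lemma GE_ker:
  assumes ev: "\<forall>i<2*p+q+2. (\<Sum>j<2*p+q+2. laplacian (2*p+q+2) (GE p q) $$ (i,j) * x j) = 0"
  shows "\<forall>i<2*p+q+2. x i = x 0"
proof -
  let ?N = "2*p+q+2"
  have "(\<Sum>i<?N. x i * (\<Sum>j<?N. laplacian ?N (GE p q) $$ (i,j) * x j)) = 0" using ev by simp
  then have "(\<Sum>i<?N. \<Sum>j<?N. if GE p q i j then (x i - x j)^2 else 0) = 0"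
    unfolding lap_quad[OF GE_sg] by simp
  moreover
  define f where "f = (\<lambda>i. (\<Sum>j<?N. if GE p q i j then (x i - x j)^2 else (0::real)))"
  have nn: "0 \<le> f i" for i unfolding f_def by (rule sum_nonneg) simp
  have iff: "(\<Sum>i<?N. f i) = 0 \<longleftrightarrow> (\<forall>i\<in>{..<?N}. f i = 0)"
    by (rule sum_nonneg_eq_0_iff) (auto intro: nn)
  ultimately have "\<forall>i\<in>{..<?N}. (\<Sum>j<?N. if GE p q i j then (x i - x j)^2 else 0) = 0"
    unfolding f_def by blast
  then have eq: "GE p q i j \<Longrightarrow> x i = x j" for i j
  proof -
    assume h: "\<forall>i\<in>{..<?N}. (\<Sum>j<?N. if GE p q i j then (x i - x j)^2 else 0) = 0" and e: "GE p q i j"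
    have ij: "i < ?N" "j < ?N" using GE_sg[of p q] e unfolding simple_graph_def by blast+
    then have "(\<Sum>j<?N. if GE p q i j then (x i - x j)^2 else 0) = 0" using h by auto
    then have "\<forall>k\<in>{..<?N}. (if GE p q i k then (x i - x k)^2 else 0) = 0"
      by (subst (asm) sum_nonneg_eq_0_iff) auto
    then have "(if GE p q i j then (x i - x j)^2 else 0) = 0" using ij(2) by blast
    then show "x i = x j" using e by simp
  qed
  show ?thesis
  proof (intro allI impI)
    fix i assume i: "i < ?N"
    have x1: "x 1 = x 0" using eq[of 0 1] GE0[of p q 1] by simp
    show "x i = x 0"
    proof (cases "i = 0")
      case False
      show ?thesis
      proof (cases "i \<le> p+q+1")
        case True then show ?thesis using eq[of 0 i] GE0[of p q i] False by simp
      next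
        case False
        then have "GE p q 1 i" using i unfolding GE1 by simp
        then show ?thesis using eq[of 1 i] x1 by simp
      qed
    qed simp
  qed
qed

definition tq :: "real \<Rightarrow> real \<Rightarrow> real" where
  "tq D q = (sqrt ((D-2)^2 + 4*q) - (D-2)) / 2"

lemma tq_eq: assumes "q \<ge> 0" shows "(tq D q)^2 + (D-2) * tq D q = q"
proof -
  have s: "(sqrt ((D-2)^2 + 4*q))^2 = (D-2)^2 + 4*q" using assms by simp
  show ?thesis unfolding tq_def using s by (simp add: power2_eq_square field_simps)
qed

lemma tq_pos: assumes "q > 0" "D \<ge> 2" shows "tq D q > 0"
proof -
  have "sqrt ((D-2)^2) < sqrt ((D-2)^2 + 4*q)" using assms by (intro real_sqrt_less_mono) simp
  then have "D - 2 < sqrt ((D-2)^2 + 4*q)" using assms by simp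
  then show ?thesis unfolding tq_def by simp
qed

lemma tq_le1: assumes "q > 0" "D \<ge> 2" "q \<le> D - 1" shows "tq D q \<le> 1"
proof (rule ccontr)
  assume "\<not> ?thesis"
  then have t1: "tq D q > 1" by simp
  have "(tq D q)^2 + (D-2) * tq D q > 1 + (D - 2)"
  proof -
    have "(tq D q)^2 > 1" using t1 by (simp add: power2_eq_square) (metis less_1_mult)
    moreover have "(D-2) * tq D q \<ge> (D - 2) * 1" using t1 assms by (intro mult_left_mono) auto
    ultimately show ?thesis by simp
  qed
  then show False using tq_eq[of q D] assms by simp
qed

lemma root1:
  fixes l D q t N :: real
  assumes "l > 2" "l^2 - (D+2)*l + N = 0" "N = 2*D - q" "t^2 + (D-2)*t = q" "t > 0"
  shows "l = D + t"
proof -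
  have "(l - (D + t)) * (l + t - 2) = 0" using assms by (simp add: algebra_simps power2_eq_square)
  moreover have "l + t - 2 > 0" using assms by simp
  ultimately show ?thesis by simp
qed

lemma root2:
  fixes l D q p :: real
  assumes "l > 2" "l^2 - (D+2)*l + (q+2) = 0" "D = p + q + 1" "p \<ge> 0"
  shows "l \<ge> D + 1"
proof (rule ccontr)
  assume "\<not> ?thesis"
  then have "l - D - 1 < 0" by simp
  moreover have "(l - 1) * (l - D - 1) = p" using assms by (simp add: algebra_simps power2_eq_square)
  moreover have "l - 1 > 0" using assms by simp
  ultimately have "p < 0" by (metis mult_pos_neg)
  then show False using assms by simp
qed

lemma root_ub:
  fixes l D c :: real
  assumes "l > 0" "l^2 - (D+2)*l + c = 0" "c > 0"
  shows "l < D + 2"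
proof (rule ccontr)
  assume "\<not> ?thesis"
  then have "l * (l - (D + 2)) \<ge> 0" using assms by simp
  moreover have "l * (l - (D+2)) = - c" using assms by (simp add: algebra_simps power2_eq_square)
  ultimately show False using assms by simp
qed

lemma GE_spec:
  assumes od: "orth_decomp (laplacian (2*p+q+2) (GE p q)) U ls (2*p+q+2)" and q: "q \<ge> 1"
    and k: "k < 2*p+q+2"
  shows "ls ! k \<le> 2 \<or> (real (p+q+1) + tq (real (p+q+1)) (real q) \<le> ls ! k \<and> ls ! k < real (p+q+1) + 2)"
proof -
  interpret orth_decomp "laplacian (2*p+q+2) (GE p q)" U ls "2*p+q+2" by (rule od)
  let ?N = "2*p+q+2"
  define x where "x = (\<lambda>i. U $$ (i,k))"
  have ev: "\<forall>i<?N. (\<Sum>j<?N. laplacian ?N (GE p q) $$ (i,j) * x j) = ls ! k * x i"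
    unfolding x_def using eigvec[OF k] by auto
  have nz: "\<not> (\<forall>i<?N. x i = 0)"
  proof
    assume "\<forall>i<?N. x i = 0"
    then have "(\<Sum>i<?N. U $$ (i,k) * U $$ (i,k)) = 0" unfolding x_def by simp
    then show False using orth_cols[OF k k] by simp
  qed
  define D where "D = real (p+q+1)"
  define t where "t = tq D (real q)"
  have teq: "t^2 + (D-2)*t = real q" unfolding t_def by (rule tq_eq) simp
  have tpos: "t > 0" unfolding t_def D_def by (rule tq_pos) (use q in auto)
  have tle: "t \<le> 1" unfolding t_def D_def by (rule tq_le1) (use q in auto)
  show ?thesis
  proof (cases "ls ! k \<le> 2")
    case False
    then have l2: "ls ! k > 2" by simp
    from GE_eig[OF ev l2] nz
    have "ls ! k ^2 - (D + 2) * ls ! k + real ?N = 0 \<or> ls ! k ^2 - (D + 2) * ls ! k + (real q + 2) = 0"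
      unfolding D_def by auto
    then have "D + t \<le> ls ! k \<and> ls ! k < D + 2"
    proof
      assume h: "ls ! k ^2 - (D + 2) * ls ! k + real ?N = 0"
      have "ls ! k = D + t" by (rule root1[OF l2 h _ teq tpos]) (simp add: D_def)
      moreover have "ls ! k < D + 2" by (rule root_ub[OF _ h]) (use l2 in auto)
      ultimately show ?thesis by simp
    next
      assume h: "ls ! k ^2 - (D + 2) * ls ! k + (real q + 2) = 0"
      have "ls ! k \<ge> D + 1" by (rule root2[OF l2 h, of "real p"]) (simp_all add: D_def)
      moreover have "ls ! k < D + 2" by (rule root_ub[OF _ h]) (use l2 in auto)
      ultimately show ?thesis using tle by simp
    qed
    then show ?thesis unfolding D_def t_def by simp
  qed simp
qed

lemma GE_zero:
  assumes od: "orth_decomp (laplacian (2*p+q+2) (GE p q)) U ls (2*p+q+2)"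
  shows "card {k. k < 2*p+q+2 \<and> ls ! k = 0} \<le> 1"
proof -
  interpret orth_decomp "laplacian (2*p+q+2) (GE p q)" U ls "2*p+q+2" by (rule od)
  let ?N = "2*p+q+2"
  have const: "U $$ (i,k) = U $$ (0,k)" if k: "k < ?N" "ls ! k = 0" and i: "i < ?N" for i k
  proof -
    have "\<forall>i<?N. (\<Sum>j<?N. laplacian ?N (GE p q) $$ (i,j) * U $$ (j,k)) = 0"
      using eigvec[OF k(1)] k(2) by simp
    from GE_ker[OF this] i show ?thesis by blast
  qed
  have "\<forall>k\<in>{k. k < ?N \<and> ls ! k = 0}. \<forall>l\<in>{k. k < ?N \<and> ls ! k = 0}. k = l"
  proof (intro ballI, rule ccontr)
    fix k l assume k: "k \<in> {k. k < ?N \<and> ls ! k = 0}" and l: "l \<in> {k. k < ?N \<and> ls ! k = 0}" and kl: "k \<noteq> l"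
    define ak where "ak = U $$ (0,k)"
    define al where "al = U $$ (0,l)"
    have ck: "U $$ (i,k) = ak" if "i \<in> {..<?N}" for i unfolding ak_def by (rule const) (use k that in auto)
    have cl: "U $$ (i,l) = al" if "i \<in> {..<?N}" for i unfolding al_def by (rule const) (use l that in auto)
    have "(\<Sum>i<?N. U $$ (i,k) * U $$ (i,l)) = (\<Sum>i<?N. ak * al)"
      by (intro sum.cong refl) (simp add: ck cl)
    then have A: "real ?N * (ak * al) = 0" using orth_cols[of k l] k l kl by simp
    have "(\<Sum>i<?N. U $$ (i,k) * U $$ (i,k)) = (\<Sum>i<?N. ak * ak)"
      by (intro sum.cong refl) (simp add: ck)
    then have "real ?N * (ak * ak) = 1" using orth_cols[of k k] k by simp
    then have B: "ak \<noteq> 0" by auto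
    have "(\<Sum>i<?N. U $$ (i,l) * U $$ (i,l)) = (\<Sum>i<?N. al * al)"
      by (intro sum.cong refl) (simp add: cl)
    then have "real ?N * (al * al) = 1" using orth_cols[of l l] l by simp
    then have C: "al \<noteq> 0" by auto
    show False using A B C by simp
  qed
  then show ?thesis by (simp add: card_le_Suc0_iff_eq)
qed

lemma sum_group_vals:
  assumes "finite I" "finite K" "\<forall>i\<in>I. f i \<in> K"
  shows "(\<Sum>i\<in>I. g (f i)) = (\<Sum>k\<in>K. g k * card {i\<in>I. f i = k})"
proof -
  have "(\<Sum>i\<in>I. g (f i)) = (\<Sum>k\<in>K. \<Sum>i\<in>{i\<in>I. f i = k}. g (f i))"
    by (rule sum.group[symmetric]) (use assms in auto)
  also have "\<dots> = (\<Sum>k\<in>K. g k * card {i\<in>I. f i = k})"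
  proof (intro sum.cong refl)
    fix k assume "k \<in> K"
    have "(\<Sum>i\<in>{i\<in>I. f i = k}. g (f i)) = (\<Sum>i\<in>{i\<in>I. f i = k}. g k)" by (intro sum.cong) auto
    then show "(\<Sum>i\<in>{i\<in>I. f i = k}. g (f i)) = g k * card {i\<in>I. f i = k}" by (simp add: mult.commute)
  qed
  finally show ?thesis .
qed

lemma gap_nat:
  fixes d D :: nat and t :: real
  assumes g: "(real d - 2) * (real D + t - 1 - real d) \<le> 2" and t: "t > 0"
    and d: "3 \<le> d" "d + 2 \<le> D"
  shows "d = 3 \<and> D = 5"
proof -
  have "(real d - 2) * (real D + t - 1 - real d) = (real d - 2) * (real D - 1 - real d) + (real d - 2) * t"
    by (simp add: algebra_simps)
  moreover have "(real d - 2) * t > 0" using d t by simp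
  ultimately have "(real d - 2) * (real D - 1 - real d) < 2" using g by simp
  moreover have "real ((d - 2) * (D - 1 - d)) = (real d - 2) * (real D - 1 - real d)" using d
    by (simp add: of_nat_diff)
  ultimately have "(d - 2) * (D - 1 - d) < 2" by linarith
  moreover have "d - 2 \<ge> 1" "D - 1 - d \<ge> 1" using d by auto
  ultimately have lt: "(d - 2) * (D - 1 - d) < 2" and a1: "d - 2 \<ge> 1" and b1: "D - 1 - d \<ge> 1" by auto
  have "d - 2 \<le> 1"
  proof (rule ccontr)
    assume "\<not> d - 2 \<le> 1"
    then have "(d - 2) * (D - 1 - d) \<ge> 2 * 1" using b1 by (intro mult_le_mono) auto
    then show False using lt by simp
  qed
  moreover have "D - 1 - d \<le> 1"
  proof (rule ccontr)
    assume "\<not> D - 1 - d \<le> 1"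
    then have "(d - 2) * (D - 1 - d) \<ge> 1 * 2" using a1 by (intro mult_le_mono) auto
    then show False using lt by simp
  qed
  ultimately show ?thesis using d a1 b1 by auto
qed

lemma arith_gen:
  fixes p q c1 c2 cb ca D :: nat and t :: real
  assumes D: "D = p+q+1" and D5: "D \<noteq> 5" and q: "q \<ge> 1" and n6: "2*p+q+2 \<ge> 6"
    and e1: "c1 + c2 + cb + ca = 2*p+q+2"
    and e2: "c1 + 2*c2 + (D-1)*cb + D*ca = 2*D+2*q+2*p"
    and e3: "c1 + 4*c2 + (D-1)^2*cb + D^2*ca = 2*D^2+4*q+2*p"
    and tb: "cb > 0 \<Longrightarrow> (real D - 3) * t \<le> 2" and t: "t > 0" "t^2 + (real D - 2)*t = real q"
  shows "ca = 2 \<and> cb = 0 \<and> c2 = q \<and> c1 = 2*p"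
proof -
  define d where "d = int p + int q + 1"
  have d4: "d \<ge> 4" using n6 q unfolding d_def by linarith
  have dD: "int D = d" unfolding d_def D by simp
  have E1: "int c1 + int c2 + int cb + int ca = 2*int p + int q + 2" using e1 by linarith
  have E2: "int c1 + 2*int c2 + (d-1)*int cb + d*int ca = 2*d + 2*int q + 2*int p"
  proof -
    have "int (c1 + 2*c2 + (D-1)*cb + D*ca) = int (2*D+2*q+2*p)" using e2 by simp
    then show ?thesis using d4 dD by (simp add: of_nat_diff)
  qed
  have E3: "int c1 + 4*int c2 + (d-1)^2*int cb + d^2*int ca = 2*d^2 + 4*int q + 2*int p"
  proof -
    have "int (c1 + 4*c2 + (D-1)^2*cb + D^2*ca) = int (2*D^2+4*q+2*p)" using e3 by simp
    then show ?thesis using d4 dD by (simp add: of_nat_diff)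
  qed
  have "(d-2)*((d-3)*int cb + (d-1)*int ca - 2*(d-1)) =
     (int c1 + 4*int c2 + (d-1)^2*int cb + d^2*int ca - (2*d^2 + 4*int q + 2*int p))
     - 3*(int c1 + 2*int c2 + (d-1)*int cb + d*int ca - (2*d + 2*int q + 2*int p))
     + 2*(int c1 + int c2 + int cb + int ca - (2*int p + int q + 2))"
    unfolding d_def by (simp add: algebra_simps power2_eq_square)
  also have "\<dots> = 0" using E1 E2 E3 by simp
  finally have "(d-2)*((d-3)*int cb + (d-1)*int ca - 2*(d-1)) = 0" .
  then have key: "(d-3)*int cb + (d-1)*int ca = 2*(d-1)" using d4 by simp
  have ca3: "int ca \<le> 2"
  proof (rule ccontr)
    assume "\<not> int ca \<le> 2"
    then have "(d-1)*int ca \<ge> (d-1)*3" using d4 by (intro mult_left_mono) auto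
    then have a: "(d-1)*int ca \<ge> 3*d - 3" by simp
    have b: "(d-3)*int cb \<ge> 0" using d4 by simp
    have c: "(d-3)*int cb + (d-1)*int ca = 2*d - 2" using key by simp
    from a b c d4 show False by linarith
  qed
  have "int ca = 2 \<or> int ca = 1 \<or> int ca = 0" using ca3 by linarith
  then show ?thesis
  proof (elim disjE)
    assume ca: "int ca = 2"
    then have "(d-3)*int cb = 0" using key by simp
    then have "cb = 0" using d4 by simp
    then show ?thesis using ca E1 E2 by simp
  next
    assume ca: "int ca = 1"
    then have k1: "(d-3)*int cb = d-1" using key by simp
    show ?thesis
    proof (cases "cb \<ge> 2")
      case True
      then have "(d-3)*int cb \<ge> (d-3)*2" using d4 by (intro mult_left_mono) auto
      then have b: "(d-3)*int cb \<ge> 2*d - 6" by simp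
      from b k1 have "d \<le> 5" by simp
      moreover have "d \<noteq> 5" using D5 dD by auto
      ultimately have d4': "d = 4" using d4 by simp
      then have "int cb = 3" using k1 by simp
      then show ?thesis using E1 E2 ca d4' d_def n6 by simp
    next
      case False
      then have "cb = 0 \<or> cb = 1" by auto
      then show ?thesis using k1 d4 by auto
    qed
  next
    assume ca: "int ca = 0"
    then have k0: "(d-3)*int cb = 2*(d-1)" using key by simp
    consider "cb \<le> 2" | "cb = 3" | "cb \<ge> 4" by linarith
    then show ?thesis
    proof cases
      case 1
      then have "(d-3)*int cb \<le> (d-3)*2" using d4 by (intro mult_left_mono) auto
      then have b: "(d-3)*int cb \<le> 2*d - 6" by simp
      have c: "(d-3)*int cb = 2*d - 2" using k0 by simp
      from b c show ?thesis by simp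
    next
      case 2
      then have d7: "d = 7" using k0 by simp
      then have "D = 7" using dD by simp
      then have "4 * t \<le> 2" using tb 2 by simp
      then have th: "t \<le> 1/2" by simp
      have "t^2 \<le> (1/2)^2" using th t(1) by (intro power_mono) auto
      then have "t^2 \<le> 1/4" by (simp add: power2_eq_square)
      then have "real q \<le> 11/4" using t(2) th \<open>D = 7\<close> by simp
      then have "q \<le> 2" by simp
      then show ?thesis using E1 E2 ca 2 d7 d_def by simp
    next
      case 3
      then have "(d-3)*int cb \<ge> (d-3)*4" using d4 by (intro mult_left_mono) auto
      then have b: "(d-3)*int cb \<ge> 4*d - 12" by simp
      have c: "(d-3)*int cb = 2*d - 2" using k0 by simp
      from b c have "d \<le> 5" by simp
      moreover have "d \<noteq> 5" using D5 dD by auto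
      ultimately have d4': "d = 4" using d4 by simp
      then have "int cb = 6" using k0 by simp
      then show ?thesis using E1 E2 ca d4' d_def by simp
    qed
  qed
qed

lemma arith_5:
  fixes p q c1 c2 c3 c4 c5 :: nat
  assumes pq: "p + q = 4" and q: "q \<ge> 1"
    and e1: "c1 + c2 + c3 + c4 + c5 = 2*p+q+2"
    and e2: "c1 + 2*c2 + 3*c3 + 4*c4 + 5*c5 = 18"
    and e3: "c1 + 4*c2 + 9*c3 + 16*c4 + 25*c5 = 58 + 2*q"
    and eg: "2 * (4*c4 + 5*c5) \<le> (c4+c5) * (c4+c5-1) + 18"
  shows "c5 = 2 \<and> c4 = 0 \<and> c3 = 0 \<and> c2 = q \<and> c1 = 2*p"
proof -
  have l1: "c3 + 3*c4 + 6*c5 = 12" using pq e1 e2 e3 by linarith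
  have l2: "c2 + 2*c3 + 3*c4 + 4*c5 = 8 + q" using pq e1 e2 by linarith
  have "c5 \<le> 2" using l1 by linarith
  then consider "c5 = 0" | "c5 = 1" | "c5 = 2" by linarith
  then show ?thesis
  proof cases
    case 1
    then have "q = 4" "c2 = 0" "c3 = 0" using l1 l2 pq by linarith+
    then have "c4 = 4" using l1 1 by linarith
    then show ?thesis using eg 1 by simp
  next
    case 2
    then have "c4 \<le> 2" using l1 by linarith
    then consider "c4 = 0" | "c4 = 1" | "c4 = 2" by linarith
    then show ?thesis
    proof cases
      case 1 then show ?thesis using l1 l2 \<open>c5 = 1\<close> pq by linarith
    next
      case 2 then show ?thesis using l1 l2 \<open>c5 = 1\<close> pq by linarith
    next
      case 3 then show ?thesis using eg \<open>c5 = 1\<close> by simp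
    qed
  next
    case 3
    then have "c3 = 0" "c4 = 0" using l1 by linarith+
    then show ?thesis using 3 l2 e1 by linarith
  qed
qed

lemma deg_sum_nat: "degree n E i = (\<Sum>j<n. if E i j then 1 else (0::nat))"
proof -
  have e: "{j. j < n \<and> E i j} = {j \<in> {..<n}. E i j}" by auto
  have "degree n E i = (\<Sum>j\<in>{j \<in> {..<n}. E i j}. 1)" unfolding degree_def e card_eq_sum ..
  also have "\<dots> = (\<Sum>j<n. if E i j then 1 else 0)" by (rule sum.inter_filter[OF finite_lessThan])
  finally show ?thesis .
qed

lemma eg_bound:
  assumes sg: "simple_graph n E" and X: "X \<subseteq> {..<n}"
  shows "2 * (\<Sum>i\<in>X. degree n E i) \<le> card X * (card X - 1) + (\<Sum>i<n. degree n E i)"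
proof -
  define e where "e = (\<lambda>i j. if E i j then 1 else (0::nat))"
  define Y where "Y = {..<n} - X"
  have fX: "finite X" using X finite_subset by blast
  have fY: "finite Y" unfolding Y_def by simp
  have XY: "{..<n} = X \<union> Y" "X \<inter> Y = {}" using X unfolding Y_def by auto
  have split: "(\<Sum>j<n. g j) = (\<Sum>j\<in>X. g j) + (\<Sum>j\<in>Y. g j)" for g :: "nat \<Rightarrow> nat"
    unfolding XY(1) by (rule sum.union_disjoint[OF fX fY XY(2)])
  define A where "A = (\<Sum>i\<in>X. \<Sum>j\<in>X. e i j)"
  define B where "B = (\<Sum>i\<in>X. \<Sum>j\<in>Y. e i j)"
  have degX: "(\<Sum>i\<in>X. degree n E i) = A + B"
    unfolding A_def B_def deg_sum_nat e_def by (simp add: split sum.distrib)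
  have B': "(\<Sum>i\<in>Y. \<Sum>j\<in>X. e i j) = B"
  proof -
    have "(\<Sum>i\<in>Y. \<Sum>j\<in>X. e i j) = (\<Sum>j\<in>X. \<Sum>i\<in>Y. e i j)" by (rule sum.swap)
    also have "\<dots> = B" unfolding B_def e_def using sg_sym[OF sg] by (intro sum.cong refl) auto
    finally show ?thesis .
  qed
  have tot: "(\<Sum>i<n. degree n E i) = A + B + (\<Sum>i\<in>Y. \<Sum>j\<in>X. e i j) + (\<Sum>i\<in>Y. \<Sum>j\<in>Y. e i j)"
  proof -
    have "(\<Sum>i<n. degree n E i) = (\<Sum>i\<in>X. degree n E i) + (\<Sum>i\<in>Y. degree n E i)" by (rule split)
    also have "(\<Sum>i\<in>Y. degree n E i) = (\<Sum>i\<in>Y. \<Sum>j\<in>X. e i j) + (\<Sum>i\<in>Y. \<Sum>j\<in>Y. e i j)"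
      unfolding deg_sum_nat e_def by (simp add: split sum.distrib)
    finally show ?thesis using degX by simp
  qed
  have Ale: "A \<le> card X * (card X - 1)"
  proof -
    have "A \<le> (\<Sum>i\<in>X. card X - 1)"
      unfolding A_def
    proof (rule sum_mono)
      fix i assume i: "i \<in> X"
      have "(\<Sum>j\<in>X. e i j) = (\<Sum>j\<in>X - {i}. e i j) + e i i"
        using i fX by (simp add: sum.remove add.commute)
      also have "e i i = 0" unfolding e_def using sg_irrefl[OF sg] by simp
      also have "(\<Sum>j\<in>X - {i}. e i j) \<le> (\<Sum>j\<in>X - {i}. 1)" unfolding e_def by (intro sum_mono) auto
      also have "\<dots> = card X - 1" using i fX by simp
      finally show "(\<Sum>j\<in>X. e i j) \<le> card X - 1" by simp
    qed
    also have "\<dots> = card X * (card X - 1)" by simp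
    finally show ?thesis .
  qed
  show ?thesis using degX tot B' Ale by simp
qed

lemma deg_count:
  fixes f :: "nat \<Rightarrow> nat" and p q :: nat and t :: real
  assumes q: "q \<ge> 1" and n6: "2*p+q+2 \<ge> 6"
  and lo: "\<forall>i<2*p+q+2. 1 \<le> f i" and hi: "\<forall>i<2*p+q+2. f i \<le> p+q+1"
  and gap: "\<forall>i<2*p+q+2. (real (f i) - 2) * (real (p+q+1) + t - 1 - real (f i)) \<le> 2"
  and t: "t > 0" "t^2 + (real (p+q+1) - 2)*t = real q"
  and s1: "(\<Sum>i<2*p+q+2. f i) = 2*(p+q+1) + 2*q + 2*p"
  and s2: "(\<Sum>i<2*p+q+2. (f i)^2) = 2*(p+q+1)^2 + 4*q + 2*p"
  and eg: "\<forall>X \<subseteq> {..<2*p+q+2}. 2 * (\<Sum>i\<in>X. f i) \<le> card X * (card X - 1) + (\<Sum>i<2*p+q+2. f i)"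
  shows "card {i\<in>{..<2*p+q+2}. f i = k} = (if k = p+q+1 then 2 else if k = 2 then q else if k = 1 then 2*p else 0)"
proof -
  define N where "N = 2*p+q+2"
  define D where "D = p+q+1"
  define cnt where "cnt = (\<lambda>k. card {i\<in>{..<N}. f i = k})"
  note defs = N_def[symmetric] D_def[symmetric]
  have lo': "\<forall>i<N. 1 \<le> f i" and hi': "\<forall>i<N. f i \<le> D" using lo hi unfolding defs .
  have gap': "\<forall>i<N. (real (f i) - 2) * (real D + t - 1 - real (f i)) \<le> 2" using gap unfolding defs .
  have s1': "(\<Sum>i<N. f i) = 2*D + 2*q + 2*p" using s1 unfolding defs .
  have s2': "(\<Sum>i<N. (f i)^2) = 2*D^2 + 4*q + 2*p" using s2 unfolding defs .
  have D4: "D \<ge> 4" using q n6 unfolding D_def by linarith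
  have t': "t^2 + (real D - 2)*t = real q" using t(2) unfolding defs .
  have cntK: "cnt k = 0" if "\<forall>i<N. f i \<noteq> k" for k
    unfolding cnt_def using that by auto
  have goal: "cnt D = 2 \<and> cnt 2 = q \<and> cnt 1 = 2*p \<and> (\<forall>i<N. f i = 1 \<or> f i = 2 \<or> f i = D)"
  proof (cases "D = 5")
    case False
    have vals: "\<forall>i\<in>{..<N}. f i \<in> {1, 2, D-1, D}"
    proof
      fix i assume i: "i \<in> {..<N}"
      show "f i \<in> {1, 2, D-1, D}"
      proof (cases "3 \<le> f i \<and> f i + 2 \<le> D")
        case True
        then have "f i = 3 \<and> D = 5" using gap_nat[of "f i" D t] gap' i t(1) by auto
        then show ?thesis using False by simp
      next
        case False
        then show ?thesis using lo' hi' i by auto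
      qed
    qed
    have grp: "(\<Sum>i<N. g (f i)) = g 1 * cnt 1 + g 2 * cnt 2 + g (D-1) * cnt (D-1) + g D * cnt D"
      for g :: "nat \<Rightarrow> nat"
    proof -
      have "(\<Sum>i<N. g (f i)) = (\<Sum>k\<in>{1, 2, D-1, D}. g k * cnt k)"
        unfolding cnt_def by (rule sum_group_vals) (use vals in auto)
      also have "\<dots> = g 1 * cnt 1 + g 2 * cnt 2 + g (D-1) * cnt (D-1) + g D * cnt D"
        using D4 by (simp add: add.assoc)
      finally show ?thesis .
    qed
    have e1: "cnt 1 + cnt 2 + cnt (D-1) + cnt D = 2*p+q+2"
      using grp[of "\<lambda>_. 1"] unfolding N_def by simp
    have e2: "cnt 1 + 2*cnt 2 + (D-1)*cnt (D-1) + D*cnt D = 2*D+2*q+2*p"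
      using grp[of "\<lambda>k. k"] s1' by simp
    have e3: "cnt 1 + 4*cnt 2 + (D-1)^2*cnt (D-1) + D^2*cnt D = 2*D^2+4*q+2*p"
      using grp[of "\<lambda>k. k^2"] s2' by simp
    have tb: "(real D - 3) * t \<le> 2" if "cnt (D-1) > 0"
    proof -
      have "\<not> (\<forall>i<N. f i \<noteq> D - 1)" using that cntK[of "D-1"] by auto
      then obtain i where i: "i < N" "f i = D - 1" by auto
      then show ?thesis using gap'[rule_format, OF i(1)] D4 by (simp add: of_nat_diff)
    qed
    have r: "cnt D = 2 \<and> cnt (D-1) = 0 \<and> cnt 2 = q \<and> cnt 1 = 2*p"
      by (rule arith_gen[OF D_def False q n6 e1 e2 e3 tb t(1) t'])
    have "\<forall>i<N. f i = 1 \<or> f i = 2 \<or> f i = D"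
    proof (intro allI impI)
      fix i assume i: "i < N"
      have "f i \<noteq> D - 1"
      proof
        assume "f i = D - 1"
        then have "{i\<in>{..<N}. f i = D - 1} \<noteq> {}" using i by auto
        then have "cnt (D-1) > 0" unfolding cnt_def by (simp add: card_gt_0_iff)
        then show False using r by simp
      qed
      then show "f i = 1 \<or> f i = 2 \<or> f i = D" using vals i by auto
    qed
    then show ?thesis using r by simp
  next
    case True
    then have pq: "p + q = 4" unfolding D_def by simp
    have vals: "\<forall>i\<in>{..<N}. f i \<in> {1, 2, 3, 4, 5}"
    proof
      fix i assume i: "i \<in> {..<N}"
      have "1 \<le> f i" "f i \<le> 5" using lo' hi' True i by auto
      then show "f i \<in> {1, 2, 3, 4, 5}" by auto
    qed
    have grp: "(\<Sum>i<N. g (f i)) = g 1 * cnt 1 + g 2 * cnt 2 + g 3 * cnt 3 + g 4 * cnt 4 + g 5 * cnt 5"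
      for g :: "nat \<Rightarrow> nat"
    proof -
      have "(\<Sum>i<N. g (f i)) = (\<Sum>k\<in>{1, 2, 3, 4, 5}. g k * cnt k)"
        unfolding cnt_def by (rule sum_group_vals) (use vals in auto)
      also have "\<dots> = g 1 * cnt 1 + g 2 * cnt 2 + g 3 * cnt 3 + g 4 * cnt 4 + g 5 * cnt 5"
        by (simp add: add.assoc)
      finally show ?thesis .
    qed
    have e1: "cnt 1 + cnt 2 + cnt 3 + cnt 4 + cnt 5 = 2*p+q+2"
      using grp[of "\<lambda>_. 1"] unfolding N_def by simp
    have e2: "cnt 1 + 2*cnt 2 + 3*cnt 3 + 4*cnt 4 + 5*cnt 5 = 18"
      using grp[of "\<lambda>k. k"] s1' True pq by simp
    have e3: "cnt 1 + 4*cnt 2 + 9*cnt 3 + 16*cnt 4 + 25*cnt 5 = 58 + 2*q"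
      using grp[of "\<lambda>k. k^2"] s2' True pq by simp
    define X where "X = {i\<in>{..<N}. f i \<in> {4,5}}"
    have X: "X \<subseteq> {..<N}" unfolding X_def by auto
    have Xs: "(\<Sum>i\<in>X. f i) = 4 * cnt 4 + 5 * cnt 5"
    proof -
      have "(\<Sum>i\<in>X. f i) = (\<Sum>k\<in>{4,5}. k * card {i\<in>X. f i = k})"
        by (rule sum_group_vals) (auto simp: X_def)
      moreover have "{i\<in>X. f i = 4} = {i\<in>{..<N}. f i = 4}" unfolding X_def by auto
      moreover have "{i\<in>X. f i = 5} = {i\<in>{..<N}. f i = 5}" unfolding X_def by auto
      ultimately show ?thesis unfolding cnt_def by simp
    qed
    have Xc: "card X = cnt 4 + cnt 5"
    proof -
      have "X = {i\<in>{..<N}. f i = 4} \<union> {i\<in>{..<N}. f i = 5}" unfolding X_def by auto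
      then show ?thesis unfolding cnt_def by (simp add: card_Un_disjoint) (subst card_Un_disjoint; auto)
    qed
    have egX: "2 * (4 * cnt 4 + 5 * cnt 5) \<le> (cnt 4 + cnt 5) * (cnt 4 + cnt 5 - 1) + 18"
      using eg[unfolded defs, rule_format, OF X] Xs Xc s1' True pq by simp
    have r: "cnt 5 = 2 \<and> cnt 4 = 0 \<and> cnt 3 = 0 \<and> cnt 2 = q \<and> cnt 1 = 2*p"
      by (rule arith_5[OF pq q e1 e2 e3 egX])
    have "\<forall>i<N. f i = 1 \<or> f i = 2 \<or> f i = D"
    proof (intro allI impI)
      fix i assume i: "i < N"
      have "f i \<noteq> 3 \<and> f i \<noteq> 4"
      proof (rule ccontr)
        assume "\<not> (f i \<noteq> 3 \<and> f i \<noteq> 4)"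
        then have "{i\<in>{..<N}. f i = 3} \<noteq> {} \<or> {i\<in>{..<N}. f i = 4} \<noteq> {}" using i by auto
        then have "cnt 3 > 0 \<or> cnt 4 > 0" unfolding cnt_def by (auto simp add: card_gt_0_iff)
        then show False using r by simp
      qed
      then show "f i = 1 \<or> f i = 2 \<or> f i = D" using vals i True by auto
    qed
    then show ?thesis using r True by simp
  qed
  show ?thesis
  proof -
    have "card {i\<in>{..<N}. f i = k} = (if k = D then 2 else if k = 2 then q else if k = 1 then 2*p else 0)"
    proof (cases "k = D \<or> k = 2 \<or> k = 1")
      case True
      then show ?thesis using goal D4 unfolding cnt_def by auto
    next
      case False
      then have "{i\<in>{..<N}. f i = k} = {}" using goal by auto
      then show ?thesis using False by simp
    qed
    then show ?thesis unfolding N_def D_def .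
  qed
qed

lemma count_mset_nth: "count (mset xs) a = card {k. k < length xs \<and> xs ! k = a}"
proof -
  have "count (mset xs) a = card {k. k < length xs \<and> a = xs ! k}"
    unfolding count_mset count_list_eq_length_filter length_filter_conv_card ..
  also have "{k. k < length xs \<and> a = xs ! k} = {k. k < length xs \<and> xs ! k = a}" by auto
  finally show ?thesis .
qed

lemma count_mset_upt: "count (mset (map f [0..<n])) k = card {i\<in>{..<n}. f i = k}"
proof -
  have "count (mset (map f [0..<n])) k = card {i. i < length (map f [0..<n]) \<and> map f [0..<n] ! i = k}"
    by (rule count_mset_nth)
  also have "{i. i < length (map f [0..<n]) \<and> map f [0..<n] ! i = k} = {i\<in>{..<n}. f i = k}" by auto
  finally show ?thesis .
qed

lemma sum_upt_list: "(\<Sum>i<n. g i) = sum_list (map g [0..<n])"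
  unfolding interv_sum_list_conv_sum_set_nat set_upt lessThan_atLeast0 ..

theorem mainTheorem12:
  fixes p q n' :: nat and E' :: "nat \<Rightarrow> nat \<Rightarrow> bool"
  assumes "q \<ge> 1" and "2 * p + q + 2 \<ge> 6"
    and "simple_graph n' E'"
    and "L_cospectral n' E' (2 * p + q + 2) (binary_star'_edge p q p)"
  shows "degree_sequence n' E' = degree_sequence (2 * p + q + 2) (binary_star'_edge p q p)
       \<and> degree_sequence (2 * p + q + 2) (binary_star'_edge p q p)
           = [p + q + 1, p + q + 1] @ replicate q 2 @ replicate (2 * p) 1"
proof -
  note q = assms(1) and n6 = assms(2) and sg0 = assms(3) and cosp = assms(4)
  define N where "N = 2*p+q+2"
  define D where "D = p+q+1"
  define L where "L = [p + q + 1, p + q + 1] @ replicate q 2 @ replicate (2 * p) 1"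
  obtain U0 ls' where od0: "orth_decomp (laplacian n' E') U0 ls' n'"
    using sym_orth_decomp[OF lap_carrier lap_sym[OF sg0]] by blast
  obtain UG lsG where odG: "orth_decomp (laplacian N (GE p q)) UG lsG N"
    using sym_orth_decomp[OF lap_carrier lap_sym[OF GE_sg[of p q]]] unfolding N_def by blast
  have msG: "lap_spectrum N (GE p q) = mset lsG"
    unfolding lap_spectrum_def using orth_decomp.proots_A[OF odG] .
  have ms0: "lap_spectrum n' E' = mset ls'"
    unfolding lap_spectrum_def using orth_decomp.proots_A[OF od0] .
  have m: "mset ls' = mset lsG" using cosp ms0 msG unfolding L_cospectral_def N_def by simp
  have nn: "n' = N"
  proof -
    have "size (mset ls') = size (mset lsG)" using m by simp
    then have "length ls' = length lsG" by simp
    then show ?thesis using orth_decomp.len[OF od0] orth_decomp.len[OF odG] by simp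
  qed
  have sg: "simple_graph N E'" using sg0 nn by simp
  have od: "orth_decomp (laplacian N E') U0 ls' N" using od0 nn by simp
  have "set_mset (mset ls') = set_mset (mset lsG)" using m by simp
  then have setm: "set ls' = set lsG" by simp
  have lenG: "length lsG = N" using orth_decomp.len[OF odG] .
  have len': "length ls' = N" using orth_decomp.len[OF od] .
  have tr1: "(\<Sum>i<N. real (degree N E' i)) = (\<Sum>i<N. real (degree N (GE p q) i))"
  proof -
    have "(\<Sum>i<N. real (degree N E' i)) = sum_list ls'"
      using lap_trace1[OF sg] orth_decomp.trace1[OF od] by simp
    also have "\<dots> = sum_list lsG"
    proof -
      have "sum_mset (mset ls') = sum_mset (mset lsG)" using m by simp
      then show ?thesis by (simp only: sum_mset_sum_list)
    qed
    also have "\<dots> = (\<Sum>i<N. real (degree N (GE p q) i))"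
      using lap_trace1[OF GE_sg[of p q]] orth_decomp.trace1[OF odG] unfolding N_def by simp
    finally show ?thesis .
  qed
  have tr2: "(\<Sum>i<N. (real (degree N E' i))^2 + real (degree N E' i)) =
             (\<Sum>i<N. (real (degree N (GE p q) i))^2 + real (degree N (GE p q) i))"
  proof -
    have "(\<Sum>i<N. (real (degree N E' i))^2 + real (degree N E' i)) = sum_list (map (\<lambda>a. a^2) ls')"
      using lap_trace2[OF sg] orth_decomp.trace2[OF od] by simp
    also have "\<dots> = sum_list (map (\<lambda>a. a^2) lsG)"
    proof -
      have "mset (map (\<lambda>a. a^2) ls') = mset (map (\<lambda>a. a^2) lsG)" using m by simp
      then have "sum_mset (mset (map (\<lambda>a. a^2) ls')) = sum_mset (mset (map (\<lambda>a. a^2) lsG))" by simp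
      then show ?thesis by (simp only: sum_mset_sum_list)
    qed
    also have "\<dots> = (\<Sum>i<N. (real (degree N (GE p q) i))^2 + real (degree N (GE p q) i))"
      using lap_trace2[OF GE_sg[of p q]] orth_decomp.trace2[OF odG] unfolding N_def by simp
    finally show ?thesis .
  qed
  have degsG: "map (degree N (GE p q)) [0..<N] = L" unfolding N_def L_def by (rule GE_degs)
  have sG1: "(\<Sum>i<N. real (degree N (GE p q) i)) = real (2*D + 2*q + 2*p)"
  proof -
    have "(\<Sum>i<N. real (degree N (GE p q) i)) = sum_list (map real (map (degree N (GE p q)) [0..<N]))"
      unfolding sum_upt_list by (simp add: comp_def)
    also have "\<dots> = real (2*D + 2*q + 2*p)" unfolding degsG L_def D_def
      by (simp add: sum_list_replicate)
    finally show ?thesis .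
  qed
  have sG2: "(\<Sum>i<N. (real (degree N (GE p q) i))^2 + real (degree N (GE p q) i))
      = real (2*D^2 + 4*q + 2*p) + real (2*D + 2*q + 2*p)"
  proof -
    have "(\<Sum>i<N. (real (degree N (GE p q) i))^2 + real (degree N (GE p q) i))
        = sum_list (map (\<lambda>d. (real d)^2 + real d) (map (degree N (GE p q)) [0..<N]))"
      unfolding sum_upt_list by (simp add: comp_def)
    also have "\<dots> = real (2*D^2 + 4*q + 2*p) + real (2*D + 2*q + 2*p)" unfolding degsG L_def D_def
      by (simp add: sum_list_replicate algebra_simps power2_eq_square)
    finally show ?thesis .
  qed
  define f where "f = degree N E'"
  have s1: "(\<Sum>i<N. f i) = 2*D + 2*q + 2*p"
  proof -
    have "real (\<Sum>i<N. f i) = real (2*D + 2*q + 2*p)" using tr1 sG1 unfolding f_def by simp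
    then show ?thesis by (simp only: of_nat_eq_iff)
  qed
  have s2: "(\<Sum>i<N. (f i)^2) = 2*D^2 + 4*q + 2*p"
  proof -
    have "(\<Sum>i<N. (real (f i))^2) + (\<Sum>i<N. real (f i)) = real (2*D^2 + 4*q + 2*p) + real (2*D + 2*q + 2*p)"
      using tr2 sG2 unfolding f_def by (simp add: sum.distrib)
    then have "(\<Sum>i<N. (real (f i))^2) = real (2*D^2 + 4*q + 2*p)" using tr1 sG1 unfolding f_def by simp
    then have "real (\<Sum>i<N. (f i)^2) = real (2*D^2 + 4*q + 2*p)" by simp
    then show ?thesis by (simp only: of_nat_eq_iff)
  qed
  define t where "t = tq (real D) (real q)"
  have tpos: "t > 0" unfolding t_def by (rule tq_pos) (use q in \<open>auto simp: D_def\<close>)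
  have teq: "t^2 + (real D - 2)*t = real q" unfolding t_def by (rule tq_eq) simp
  have D4: "D \<ge> 4" using q n6 unfolding D_def by linarith
  have spec: "ls' ! k \<le> 2 \<or> (real D + t \<le> ls' ! k \<and> ls' ! k < real D + 2)" if k: "k < N" for k
  proof -
    have "ls' ! k \<in> set lsG" using setm len' k by (metis nth_mem)
    then obtain k' where k': "k' < N" "lsG ! k' = ls' ! k" using lenG by (metis in_set_conv_nth)
    from GE_spec[OF odG[unfolded N_def] q k'(1)[unfolded N_def]] k'(2)
    show ?thesis unfolding t_def D_def by simp
  qed
  define c where "c = Max (set ls')"
  have ne: "set ls' \<noteq> {}" using len' n6 unfolding N_def by auto
  have cmem: "c \<in> set ls'" unfolding c_def using ne by simp
  have cub: "c < real D + 2"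
  proof -
    obtain k where k: "k < N" "ls' ! k = c" using cmem len' by (metis in_set_conv_nth)
    then show ?thesis using spec[OF k(1)] D4 by auto
  qed
  have cge: "\<forall>k<N. ls' ! k \<le> c" unfolding c_def using len' by auto
  have lo: "\<forall>i<N. 1 \<le> f i"
  proof (intro allI impI, rule ccontr)
    fix v assume v: "v < N" and "\<not> 1 \<le> f v"
    then have d0: "degree N E' v = 0" unfolding f_def by simp
    define w where "w = (if v = 0 then 1 else 0 :: nat)"
    have w: "w < N" "w \<noteq> v" unfolding w_def N_def using n6 by auto
    have "card {k. k < N \<and> ls' ! k = 0} \<ge> 2" by (rule zero_mult[OF sg od v w d0])
    moreover have "card {k. k < N \<and> lsG ! k = 0} \<le> 1" using GE_zero[OF odG[unfolded N_def]] unfolding N_def .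
    moreover have "count (mset ls') 0 = card {k. k < N \<and> ls' ! k = 0}" using len' count_mset_nth by metis
    moreover have "count (mset lsG) 0 = card {k. k < N \<and> lsG ! k = 0}" using lenG count_mset_nth by metis
    ultimately show False using m by simp
  qed
  have hi: "\<forall>i<N. f i \<le> D"
  proof (intro allI impI)
    fix v assume v: "v < N"
    have "real (f v) + 1 \<le> c" unfolding f_def
      by (rule star_bound[OF sg od cge v]) (use lo v in \<open>auto simp: f_def\<close>)
    then show "f v \<le> D" using cub by simp
  qed
  have gap: "\<forall>i<N. (real (f i) - 2) * (real D + t - 1 - real (f i)) \<le> 2"
  proof (intro allI impI)
    fix v assume v: "v < N"
    have g: "\<forall>k<N. ls' ! k \<le> 2 \<or> ls' ! k \<ge> real D + t" using spec by auto
    have "(real (f v))^2 + real (f v) - (2 + (real D + t)) * real (f v) + 2 * (real D + t) \<ge> 0"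
      unfolding f_def by (rule gap_bound[OF sg od g _ v]) (use D4 tpos in simp)
    then show "(real (f v) - 2) * (real D + t - 1 - real (f v)) \<le> 2"
      by (simp add: algebra_simps power2_eq_square)
  qed
  have eg: "\<forall>X \<subseteq> {..<N}. 2 * (\<Sum>i\<in>X. f i) \<le> card X * (card X - 1) + (\<Sum>i<N. f i)"
    unfolding f_def using eg_bound[OF sg] by blast
  have cnt: "card {i\<in>{..<N}. f i = k} = (if k = D then 2 else if k = 2 then q else if k = 1 then 2*p else 0)" for k
    using deg_count[OF q n6, of f t k] lo hi gap tpos teq s1 s2 eg unfolding N_def D_def by simp
  have sortedL: "sorted (rev L)" unfolding L_def using D4 by (auto simp: sorted_append D_def)
  have mL: "mset (map f [0..<N]) = mset (rev L)"
  proof (rule multiset_eqI)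
    fix k
    have "count (mset (rev L)) k = (if k = D then 2 else if k = 2 then q else if k = 1 then 2*p else 0)"
      unfolding L_def using D4 by (auto simp: D_def)
    then show "count (mset (map f [0..<N])) k = count (mset (rev L)) k"
      unfolding count_mset_upt cnt by simp
  qed
  have mG: "mset (map (degree N (GE p q)) [0..<N]) = mset (rev L)" unfolding degsG by simp
  have ds': "degree_sequence N E' = L"
    unfolding degree_sequence_def f_def[symmetric] using properties_for_sort[OF mL[symmetric] sortedL] by simp
  have dsG: "degree_sequence N (GE p q) = L"
    unfolding degree_sequence_def using properties_for_sort[OF mG[symmetric] sortedL] by simp
  show ?thesis using ds' dsG nn unfolding N_def L_def by simp
qed

end
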